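(* Algorithm Oh-MAM (described in the context) implements an atomic multi-writer/multi-reader read/write register in an asynchronous message-passing system with any number of crash-prone writers and readers and a set $\mathcal{S}$ of servers of which up to $f<|\mathcal{S}|/2$ may crash; i.e., it satisfies both termination and atomicity.
   Context: System model: processes have unique identifiers from a totally ordered set and are partitioned into writers $\mathcal{W}$, readers $\mathcal{R}$ and servers $\mathcal{S}$. Processes are asynchronous; any subset of writers and readers and up to $f<|\mathcal{S}|/2$ servers may crash. Communication is by asynchronous reliable point-to-point channels (messages may be reordered); "broadcast" means sending a point-to-point message to every server. Each process invokes at most one operation at a time. Tags: a tag is a pair $(ts,id)$ with $ts$ a natural number and $id$ a process identifier; tags are compared lexicographically. Algorithm Oh-MAM. Server $s$ stores a tag (initially $(0,s)$), a value $v$ (initially $\perp$), and an array $write\_operations$ indexed by writers (initially all $0$). Write$(val)$ at writer $w$ (which keeps a counter $write\_op$, initially $0$): increment $write\_op$; broadcast $\langle discover, write\_op, w\rangle$; wait for $|\mathcal{S}|/2+1$ $discoverAck$ messages carrying this $write\_op$; let $maxTS$ be the maximum timestamp component among the tags received; set $tag=(maxTS+1,w)$; increment $write\_op$; broadcast $\langle writeRequest, (tag,val), write\_op, w\rangle$; wait for $|\mathcal{S}|/2+1$ $writeAck$ messages carrying this $write\_op$; return. Server on $\langle discover, write\_op, w\rangle$: send $\langle discoverAck, (tag,v), write\_op, s\rangle$ to $w$. Server on $\langle writeRequest,(tag',v'),write\_op,w\rangle$: if $tag<tag'$ and $write\_operations[w]<write\_op$ then set $(tag,v)\leftarrow(tag',v')$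 and $write\_operations[w]\leftarrow write\_op$; in any case send $\langle writeAck,(tag,v),write\_op,s\rangle$ to $w$. Read at reader $r$: broadcast a $readRequest$ message (identifying the read operation) to all servers. A server receiving the $readRequest$ broadcasts a $readRelay$ message carrying its current $(tag,v)$ and identifying the read to all servers. A server receiving a $readRelay$ (whether or not it has yet received the corresponding $readRequest$; relays are never discarded) updates its $(tag,v)$ to the received pair if the received tag is larger; once it has received $readRelay$ messages for that read from $|\mathcal{S}|/2+1$ servers, it sends a $readAck$ carrying its current $(tag,v)$ to $r$. The reader waits for $readAck$ messages from $|\mathcal{S}|/2+1$ servers and returns the value associated with the minimum tag among them. Atomic register: (termination) every operation invoked by a correct process eventually completes; (atomicity) in every execution in which all invoked operations complete, there is a partial order $\prec$ on operations such that: (P1) if $\pi$ completes before $\pi'$ is invoked then not $\pi'\prec\pi$; (P2) all writes are totally ordered and every read is ordered with respect to all writes; (P3) every read returns the value of the last write preceding it in $\prec$, and a read ordered before all writes returns the initial value. *)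

theory Defs
  imports Main "HOL-Library.Multiset" "HOL-Library.Product_Lexorder"
begin

text \<open>Process identifiers are of a linearly ordered type 'p.  Tags are pairs
(ts, id) :: nat \<times> 'p, ordered lexicographically (Product_Lexorder).
Values are of type 'v option, where None is the initial value \<bottom>.\<close>

type_synonym 'p tag = "nat \<times> 'p"

datatype ('p,'v) msg =
    Discover nat 'p                                  (* write_op, writer *)
  | DiscoverAck "'p tag" "'v option" nat 'p          (* (tag,v), write_op, server *)
  | WriteRequest "'p tag" "'v option" nat 'p         (* (tag,val), write_op, writer *)
  | WriteAck "'p tag" "'v option" nat 'p             (* (tag,v), write_op, server *)
  | ReadRequest "'p \<times> nat"                         (* read id = (reader, read counter) *)
  | ReadRelay "'p tag" "'v option" "'p \<times> nat" 'p     (* (tag,v), read id, relaying server *)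
  | ReadAck "'p tag" "'v option" "'p \<times> nat" 'p       (* (tag,v), read id, server *)

text \<open>A packet in transit: (sender, receiver, message).\<close>
type_synonym ('p,'v) packet = "'p \<times> 'p \<times> ('p,'v) msg"

datatype ('p,'v) wphase =
    WIdle
  | WDisc 'v "'p \<rightharpoonup> 'p tag"       (* value to write; discoverAcks received (server \<mapsto> tag) *)
  | WWrite "'p set"                   (* servers whose writeAck has been received *)

datatype ('p,'v) rphase =
    RIdle
  | RWait "'p \<rightharpoonup> ('p tag \<times> 'v option)"  (* readAcks received (server \<mapsto> (tag,v)) *)

datatype 'v opkind = OWrite 'v | ORead

datatype 'v resp = WResp | RResp "'v option"

datatype ('p,'v) label =
    Inv 'p "'v opkind"
  | Dlv "('p,'v) packet" "'v resp option"     (* delivery + handling of a packet, with the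
                                                 response of an operation if one completes *)
  | Crash 'p
  | Idle

record ('p,'v) gstate =
  wop     :: "'p \<Rightarrow> nat"                       (* writer counter write_op *)
  wph     :: "'p \<Rightarrow> ('p,'v) wphase"
  rop     :: "'p \<Rightarrow> nat"
  rph     :: "'p \<Rightarrow> ('p,'v) rphase"
  stag    :: "'p \<Rightarrow> 'p tag"
  sval    :: "'p \<Rightarrow> 'v option"
  swops   :: "'p \<Rightarrow> 'p \<Rightarrow> nat"                (* server array write_operations *)
  srelays :: "'p \<Rightarrow> 'p \<times> nat \<Rightarrow> 'p set"        (* servers from which a relay for a read was received *)
  sacked  :: "'p \<Rightarrow> ('p \<times> nat) set"           (* reads for which a readAck was already sent *)
  net     :: "('p,'v) packet multiset"
  crashed :: "'p set"

definition init_state :: "('p::linorder,'v) gstate" where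
  "init_state = \<lparr> wop = (\<lambda>_. 0), wph = (\<lambda>_. WIdle), rop = (\<lambda>_. 0), rph = (\<lambda>_. RIdle),
      stag = (\<lambda>s. (0, s)), sval = (\<lambda>_. None), swops = (\<lambda>_ _. 0),
      srelays = (\<lambda>_ _. {}), sacked = (\<lambda>_. {}), net = {#}, crashed = {} \<rparr>"

definition bcast :: "'p set \<Rightarrow> 'p \<Rightarrow> ('p,'v) msg \<Rightarrow> ('p,'v) packet multiset" where
  "bcast S src m = image_mset (\<lambda>s. (src, s, m)) (mset_set S)"

definition quorum :: "'p set \<Rightarrow> nat" where
  "quorum S = card S div 2 + 1"

fun server_msg :: "('p,'v) msg \<Rightarrow> bool" where
  "server_msg (Discover _ _) = True"
| "server_msg (WriteRequest _ _ _ _) = True"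
| "server_msg (ReadRequest _) = True"
| "server_msg (ReadRelay _ _ _ _) = True"
| "server_msg _ = False"

fun writer_msg :: "('p,'v) msg \<Rightarrow> bool" where
  "writer_msg (DiscoverAck _ _ _ _) = True"
| "writer_msg (WriteAck _ _ _ _) = True"
| "writer_msg _ = False"

fun reader_msg :: "('p,'v) msg \<Rightarrow> bool" where
  "reader_msg (ReadAck _ _ _ _) = True"
| "reader_msg _ = False"

definition handled :: "'p set \<Rightarrow> 'p set \<Rightarrow> 'p set \<Rightarrow> 'p \<Rightarrow> ('p,'v) msg \<Rightarrow> bool" where
  "handled W R S p m \<longleftrightarrow> (p \<in> S \<and> server_msg m) \<or> (p \<in> W \<and> writer_msg m) \<or> (p \<in> R \<and> reader_msg m)"

text \<open>One atomic step of the whole system.  Receiving a message and executing the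
resulting local computation (up to the next wait) is atomic.\<close>
inductive step :: "'p set \<Rightarrow> 'p set \<Rightarrow> 'p set \<Rightarrow> ('p::linorder,'v) gstate \<Rightarrow> ('p,'v) label
                   \<Rightarrow> ('p,'v) gstate \<Rightarrow> bool"
  for W R S where
  idle: "step W R S \<sigma> Idle \<sigma>"
| crash: "p \<notin> crashed \<sigma> \<Longrightarrow> step W R S \<sigma> (Crash p) (\<sigma>\<lparr>crashed := insert p (crashed \<sigma>)\<rparr>)"
| inv_write: "\<lbrakk> w \<in> W; w \<notin> crashed \<sigma>; wph \<sigma> w = WIdle; k = Suc (wop \<sigma> w) \<rbrakk> \<Longrightarrow>
    step W R S \<sigma> (Inv w (OWrite v))
      (\<sigma>\<lparr>wop := (wop \<sigma>)(w := k), wph := (wph \<sigma>)(w := WDisc v Map.empty),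
         net := net \<sigma> + bcast S w (Discover k w)\<rparr>)"
| inv_read: "\<lbrakk> r \<in> R; r \<notin> crashed \<sigma>; rph \<sigma> r = RIdle; k = Suc (rop \<sigma> r) \<rbrakk> \<Longrightarrow>
    step W R S \<sigma> (Inv r ORead)
      (\<sigma>\<lparr>rop := (rop \<sigma>)(r := k), rph := (rph \<sigma>)(r := RWait Map.empty),
         net := net \<sigma> + bcast S r (ReadRequest (r, k))\<rparr>)"
| srv_discover: "\<lbrakk> (src, s, Discover k w) \<in># net \<sigma>; s \<notin> crashed \<sigma>; s \<in> S \<rbrakk> \<Longrightarrow>
    step W R S \<sigma> (Dlv (src, s, Discover k w) None)
      (\<sigma>\<lparr>net := net \<sigma> - {#(src, s, Discover k w)#}
                 + {#(s, w, DiscoverAck (stag \<sigma> s) (sval \<sigma> s) k s)#}\<rparr>)"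
| srv_write: "\<lbrakk> (src, s, WriteRequest t v k w) \<in># net \<sigma>; s \<notin> crashed \<sigma>; s \<in> S;
    \<sigma>1 = (if stag \<sigma> s < t \<and> swops \<sigma> s w < k
          then \<sigma>\<lparr>stag := (stag \<sigma>)(s := t), sval := (sval \<sigma>)(s := v),
                  swops := (swops \<sigma>)(s := (swops \<sigma> s)(w := k))\<rparr>
          else \<sigma>) \<rbrakk> \<Longrightarrow>
    step W R S \<sigma> (Dlv (src, s, WriteRequest t v k w) None)
      (\<sigma>1\<lparr>net := net \<sigma> - {#(src, s, WriteRequest t v k w)#}
                 + {#(s, w, WriteAck (stag \<sigma>1 s) (sval \<sigma>1 s) k s)#}\<rparr>)"
| srv_readreq: "\<lbrakk> (src, s, ReadRequest rid) \<in># net \<sigma>; s \<notin> crashed \<sigma>; s \<in> S \<rbrakk> \<Longrightarrow>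
    step W R S \<sigma> (Dlv (src, s, ReadRequest rid) None)
      (\<sigma>\<lparr>net := net \<sigma> - {#(src, s, ReadRequest rid)#}
                 + bcast S s (ReadRelay (stag \<sigma> s) (sval \<sigma> s) rid s)\<rparr>)"
| srv_relay: "\<lbrakk> (src, s, ReadRelay t v rid s') \<in># net \<sigma>; s \<notin> crashed \<sigma>; s \<in> S;
    \<sigma>1 = (if stag \<sigma> s < t then \<sigma>\<lparr>stag := (stag \<sigma>)(s := t), sval := (sval \<sigma>)(s := v)\<rparr> else \<sigma>);
    \<sigma>2 = \<sigma>1\<lparr>srelays := (srelays \<sigma>1)(s := (srelays \<sigma>1 s)(rid := insert s' (srelays \<sigma>1 s rid)))\<rparr>;
    \<sigma>3 = (if quorum S \<le> card (srelays \<sigma>2 s rid) \<and> rid \<notin> sacked \<sigma>2 s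
          then \<sigma>2\<lparr>sacked := (sacked \<sigma>2)(s := insert rid (sacked \<sigma>2 s)),
                   net := net \<sigma>2 + {#(s, fst rid, ReadAck (stag \<sigma>2 s) (sval \<sigma>2 s) rid s)#}\<rparr>
          else \<sigma>2) \<rbrakk> \<Longrightarrow>
    step W R S \<sigma> (Dlv (src, s, ReadRelay t v rid s') None)
      (\<sigma>3\<lparr>net := net \<sigma>3 - {#(src, s, ReadRelay t v rid s')#}\<rparr>)"
| wr_dack_ignore: "\<lbrakk> (src, w, DiscoverAck t v k s) \<in># net \<sigma>; w \<notin> crashed \<sigma>; w \<in> W;
    \<not> (\<exists>x A. wph \<sigma> w = WDisc x A \<and> k = wop \<sigma> w) \<rbrakk> \<Longrightarrow>
    step W R S \<sigma> (Dlv (src, w, DiscoverAck t v k s) None)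
      (\<sigma>\<lparr>net := net \<sigma> - {#(src, w, DiscoverAck t v k s)#}\<rparr>)"
| wr_dack_wait: "\<lbrakk> (src, w, DiscoverAck t v k s) \<in># net \<sigma>; w \<notin> crashed \<sigma>; w \<in> W;
    wph \<sigma> w = WDisc x A; k = wop \<sigma> w; A' = A(s \<mapsto> t); card (dom A') < quorum S \<rbrakk> \<Longrightarrow>
    step W R S \<sigma> (Dlv (src, w, DiscoverAck t v k s) None)
      (\<sigma>\<lparr>wph := (wph \<sigma>)(w := WDisc x A'),
         net := net \<sigma> - {#(src, w, DiscoverAck t v k s)#}\<rparr>)"
| wr_dack_done: "\<lbrakk> (src, w, DiscoverAck t v k s) \<in># net \<sigma>; w \<notin> crashed \<sigma>; w \<in> W;
    wph \<sigma> w = WDisc x A; k = wop \<sigma> w; A' = A(s \<mapsto> t); quorum S \<le> card (dom A');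
    maxTS = Max (fst ` ran A'); k' = Suc k \<rbrakk> \<Longrightarrow>
    step W R S \<sigma> (Dlv (src, w, DiscoverAck t v k s) None)
      (\<sigma>\<lparr>wop := (wop \<sigma>)(w := k'), wph := (wph \<sigma>)(w := WWrite {}),
         net := net \<sigma> - {#(src, w, DiscoverAck t v k s)#}
                + bcast S w (WriteRequest (Suc maxTS, w) (Some x) k' w)\<rparr>)"
| wr_wack_ignore: "\<lbrakk> (src, w, WriteAck t v k s) \<in># net \<sigma>; w \<notin> crashed \<sigma>; w \<in> W;
    \<not> (\<exists>A. wph \<sigma> w = WWrite A \<and> k = wop \<sigma> w) \<rbrakk> \<Longrightarrow>
    step W R S \<sigma> (Dlv (src, w, WriteAck t v k s) None)
      (\<sigma>\<lparr>net := net \<sigma> - {#(src, w, WriteAck t v k s)#}\<rparr>)"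
| wr_wack_wait: "\<lbrakk> (src, w, WriteAck t v k s) \<in># net \<sigma>; w \<notin> crashed \<sigma>; w \<in> W;
    wph \<sigma> w = WWrite A; k = wop \<sigma> w; A' = insert s A; card A' < quorum S \<rbrakk> \<Longrightarrow>
    step W R S \<sigma> (Dlv (src, w, WriteAck t v k s) None)
      (\<sigma>\<lparr>wph := (wph \<sigma>)(w := WWrite A'),
         net := net \<sigma> - {#(src, w, WriteAck t v k s)#}\<rparr>)"
| wr_wack_done: "\<lbrakk> (src, w, WriteAck t v k s) \<in># net \<sigma>; w \<notin> crashed \<sigma>; w \<in> W;
    wph \<sigma> w = WWrite A; k = wop \<sigma> w; A' = insert s A; quorum S \<le> card A' \<rbrakk> \<Longrightarrow>
    step W R S \<sigma> (Dlv (src, w, WriteAck t v k s) (Some WResp))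
      (\<sigma>\<lparr>wph := (wph \<sigma>)(w := WIdle),
         net := net \<sigma> - {#(src, w, WriteAck t v k s)#}\<rparr>)"
| rd_ack_ignore: "\<lbrakk> (src, r, ReadAck t v rid s) \<in># net \<sigma>; r \<notin> crashed \<sigma>; r \<in> R;
    \<not> (\<exists>A. rph \<sigma> r = RWait A \<and> rid = (r, rop \<sigma> r)) \<rbrakk> \<Longrightarrow>
    step W R S \<sigma> (Dlv (src, r, ReadAck t v rid s) None)
      (\<sigma>\<lparr>net := net \<sigma> - {#(src, r, ReadAck t v rid s)#}\<rparr>)"
| rd_ack_wait: "\<lbrakk> (src, r, ReadAck t v rid s) \<in># net \<sigma>; r \<notin> crashed \<sigma>; r \<in> R;
    rph \<sigma> r = RWait A; rid = (r, rop \<sigma> r); A' = A(s \<mapsto> (t, v)); card (dom A') < quorum S \<rbrakk> \<Longrightarrow>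
    step W R S \<sigma> (Dlv (src, r, ReadAck t v rid s) None)
      (\<sigma>\<lparr>rph := (rph \<sigma>)(r := RWait A'),
         net := net \<sigma> - {#(src, r, ReadAck t v rid s)#}\<rparr>)"
| rd_ack_done: "\<lbrakk> (src, r, ReadAck t v rid s) \<in># net \<sigma>; r \<notin> crashed \<sigma>; r \<in> R;
    rph \<sigma> r = RWait A; rid = (r, rop \<sigma> r); A' = A(s \<mapsto> (t, v)); quorum S \<le> card (dom A');
    (tmin, u) \<in> ran A'; tmin = Min (fst ` ran A') \<rbrakk> \<Longrightarrow>
    step W R S \<sigma> (Dlv (src, r, ReadAck t v rid s) (Some (RResp u)))
      (\<sigma>\<lparr>rph := (rph \<sigma>)(r := RIdle),
         net := net \<sigma> - {#(src, r, ReadAck t v rid s)#}\<rparr>)"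
  \<comment> \<open>a message not meant for the role of its receiver is discarded (never happens in Oh-MAM)\<close>
| unhandled: "\<lbrakk> (src, p, m) \<in># net \<sigma>; p \<notin> crashed \<sigma>; \<not> handled W R S p m \<rbrakk> \<Longrightarrow>
    step W R S \<sigma> (Dlv (src, p, m) None)
      (\<sigma>\<lparr>net := net \<sigma> - {#(src, p, m)#}\<rparr>)"

text \<open>An execution is an infinite sequence of states and step labels (finite executions are
represented by continuing with Idle steps); at most f servers crash.\<close>
definition execution :: "'p set \<Rightarrow> 'p set \<Rightarrow> 'p set \<Rightarrow> nat
    \<Rightarrow> (nat \<Rightarrow> ('p::linorder,'v) gstate) \<Rightarrow> (nat \<Rightarrow> ('p,'v) label) \<Rightarrow> bool" where
  "execution W R S f \<sigma>s ls \<longleftrightarrow>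
     \<sigma>s 0 = init_state \<and> (\<forall>i. step W R S (\<sigma>s i) (ls i) (\<sigma>s (Suc i)))
     \<and> (\<forall>i. card (crashed (\<sigma>s i) \<inter> S) \<le> f)"

definition correct :: "(nat \<Rightarrow> ('p,'v) gstate) \<Rightarrow> 'p \<Rightarrow> bool" where
  "correct \<sigma>s p \<longleftrightarrow> (\<forall>i. p \<notin> crashed (\<sigma>s i))"

definition fair :: "(nat \<Rightarrow> ('p,'v) gstate) \<Rightarrow> (nat \<Rightarrow> ('p,'v) label) \<Rightarrow> bool" where
  "fair \<sigma>s ls \<longleftrightarrow> (\<forall>i src dst m. (src, dst, m) \<in># net (\<sigma>s i) \<and> correct \<sigma>s dst
       \<longrightarrow> (\<exists>j\<ge>i. \<exists>r. ls j = Dlv (src, dst, m) r))"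

text \<open>An operation is identified by the time i of its invocation step.\<close>
definition is_op :: "(nat \<Rightarrow> ('p,'v) label) \<Rightarrow> nat \<Rightarrow> bool" where
  "is_op ls i \<longleftrightarrow> (\<exists>p k. ls i = Inv p k)"

definition op_proc :: "(nat \<Rightarrow> ('p,'v) label) \<Rightarrow> nat \<Rightarrow> 'p" where
  "op_proc ls i = (case ls i of Inv p _ \<Rightarrow> p)"

definition is_write :: "(nat \<Rightarrow> ('p,'v) label) \<Rightarrow> nat \<Rightarrow> bool" where
  "is_write ls i \<longleftrightarrow> (\<exists>p v. ls i = Inv p (OWrite v))"

definition is_read :: "(nat \<Rightarrow> ('p,'v) label) \<Rightarrow> nat \<Rightarrow> bool" where
  "is_read ls i \<longleftrightarrow> (\<exists>p. ls i = Inv p ORead)"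

definition write_val :: "(nat \<Rightarrow> ('p,'v) label) \<Rightarrow> nat \<Rightarrow> 'v" where
  "write_val ls i = (case ls i of Inv _ (OWrite v) \<Rightarrow> v)"

definition resp_by :: "(nat \<Rightarrow> ('p,'v) label) \<Rightarrow> nat \<Rightarrow> 'p \<Rightarrow> 'v resp \<Rightarrow> bool" where
  "resp_by ls j p r \<longleftrightarrow> (\<exists>src m. ls j = Dlv (src, p, m) (Some r))"

definition completes :: "(nat \<Rightarrow> ('p,'v) label) \<Rightarrow> nat \<Rightarrow> nat \<Rightarrow> 'v resp \<Rightarrow> bool" where
  "completes ls i j r \<longleftrightarrow> is_op ls i \<and> i < j \<and> resp_by ls j (op_proc ls i) r
     \<and> (\<forall>k r'. i < k \<and> k < j \<longrightarrow> \<not> resp_by ls k (op_proc ls i) r')"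

definition termination_prop :: "'p set \<Rightarrow> 'p set \<Rightarrow> 'p::linorder set \<Rightarrow> nat \<Rightarrow> 'v itself \<Rightarrow> bool" where
  "termination_prop W R S f _ \<longleftrightarrow>
    (\<forall>(\<sigma>s :: nat \<Rightarrow> ('p,'v) gstate) ls. execution W R S f \<sigma>s ls \<and> fair \<sigma>s ls \<longrightarrow>
       (\<forall>i. is_op ls i \<and> correct \<sigma>s (op_proc ls i) \<longrightarrow> (\<exists>j r. completes ls i j r)))"

definition atomicity_prop :: "'p set \<Rightarrow> 'p set \<Rightarrow> 'p::linorder set \<Rightarrow> nat \<Rightarrow> 'v itself \<Rightarrow> bool" where
  "atomicity_prop W R S f _ \<longleftrightarrow>
    (\<forall>(\<sigma>s :: nat \<Rightarrow> ('p,'v) gstate) ls. execution W R S f \<sigma>s ls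
       \<and> (\<forall>i. is_op ls i \<longrightarrow> (\<exists>j r. completes ls i j r)) \<longrightarrow>
       (\<exists>prec :: nat \<Rightarrow> nat \<Rightarrow> bool.
          \<comment> \<open>strict partial order on operations\<close>
          (\<forall>a b. prec a b \<longrightarrow> is_op ls a \<and> is_op ls b)
        \<and> (\<forall>a. \<not> prec a a)
        \<and> (\<forall>a b c. prec a b \<and> prec b c \<longrightarrow> prec a c)
          \<comment> \<open>P1\<close>
        \<and> (\<forall>a b j r. completes ls a j r \<and> is_op ls b \<and> j < b \<longrightarrow> \<not> prec b a)
          \<comment> \<open>P2\<close>
        \<and> (\<forall>a b. is_write ls a \<and> is_write ls b \<and> a \<noteq> b \<longrightarrow> prec a b \<or> prec b a)
        \<and> (\<forall>a b. is_read ls a \<and> is_write ls b \<longrightarrow> prec a b \<or> prec b a)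
          \<comment> \<open>P3\<close>
        \<and> (\<forall>a j u. is_read ls a \<and> completes ls a j (RResp u) \<longrightarrow>
             (\<exists>b. is_write ls b \<and> prec b a
                  \<and> (\<forall>c. is_write ls c \<and> prec c a \<longrightarrow> c = b \<or> prec c b)
                  \<and> u = Some (write_val ls b))
           \<or> ((\<forall>b. is_write ls b \<longrightarrow> \<not> prec b a) \<and> u = None))))"

end

theory Submission
  imports Defs
begin

lemma mem_bcast[simp]: "finite S \<Longrightarrow> x \<in># bcast S src m \<longleftrightarrow> (\<exists>s\<in>S. x = (src, s, m))"
  by (auto simp: bcast_def)

definition "B1 \<sigma> \<longleftrightarrow> (\<forall>src d k w. (src,d,Discover k w) \<in># net \<sigma> \<longrightarrow> k \<le> wop \<sigma> w)"
definition "B2 S \<sigma> \<longleftrightarrow> (\<forall>src d t v k s. (src,d,DiscoverAck t v k s) \<in># net \<sigma> \<longrightarrow> s \<in> S \<and> k \<le> wop \<sigma> d)"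
definition "B3 \<sigma> \<longleftrightarrow> (\<forall>src d t v k w. (src,d,WriteRequest t v k w) \<in># net \<sigma> \<longrightarrow> k \<le> wop \<sigma> w)"
definition "B4 S \<sigma> \<longleftrightarrow> (\<forall>src d t v k s. (src,d,WriteAck t v k s) \<in># net \<sigma> \<longrightarrow> s \<in> S \<and> k \<le> wop \<sigma> d)"
definition "B5 \<sigma> \<longleftrightarrow> (\<forall>src d rid. (src,d,ReadRequest rid) \<in># net \<sigma> \<longrightarrow> snd rid \<le> rop \<sigma> (fst rid))"
definition "B6 S \<sigma> \<longleftrightarrow> (\<forall>src d t v rid s. (src,d,ReadRelay t v rid s) \<in># net \<sigma> \<longrightarrow> s \<in> S \<and> snd rid \<le> rop \<sigma> (fst rid))"
definition "B7 S \<sigma> \<longleftrightarrow> (\<forall>src d t v rid s. (src,d,ReadAck t v rid s) \<in># net \<sigma> \<longrightarrow> s \<in> S \<and> snd rid \<le> rop \<sigma> (fst rid))"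
definition "B8 S \<sigma> \<longleftrightarrow> (\<forall>s rid. srelays \<sigma> s rid \<subseteq> S \<and> (srelays \<sigma> s rid \<noteq> {} \<longrightarrow> snd rid \<le> rop \<sigma> (fst rid)))"
definition "B9 S \<sigma> \<longleftrightarrow> (\<forall>w x A. wph \<sigma> w = WDisc x A \<longrightarrow> dom A \<subseteq> S)"
definition "B10 S \<sigma> \<longleftrightarrow> (\<forall>w A. wph \<sigma> w = WWrite A \<longrightarrow> A \<subseteq> S)"
definition "B11 S \<sigma> \<longleftrightarrow> (\<forall>r A. rph \<sigma> r = RWait A \<longrightarrow> dom A \<subseteq> S)"
definition "B12 \<sigma> \<longleftrightarrow> (\<forall>s w. swops \<sigma> s w \<le> wop \<sigma> w)"

definition "binv S \<sigma> \<longleftrightarrow> B1 \<sigma> \<and> B2 S \<sigma> \<and> B3 \<sigma> \<and> B4 S \<sigma> \<and> B5 \<sigma> \<and> B6 S \<sigma> \<and> B7 S \<sigma> \<and> B8 S \<sigma>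
   \<and> B9 S \<sigma> \<and> B10 S \<sigma> \<and> B11 S \<sigma> \<and> B12 \<sigma>"

lemma binv_init: "binv S (init_state :: ('p::linorder,'v) gstate)"
  by (simp add: binv_def B1_def B2_def B3_def B4_def B5_def B6_def B7_def B8_def B9_def B10_def
      B11_def B12_def init_state_def)

lemmas stepE = step.cases[consumes 1]

lemma B1_step: "\<lbrakk>step W R S \<sigma> l \<sigma>'; finite S; B1 \<sigma>\<rbrakk> \<Longrightarrow> B1 \<sigma>'"
  unfolding B1_def by (erule stepE; auto split: if_splits dest!: in_diffD; (fastforce intro: le_SucI)?)
lemma B2_step: "\<lbrakk>step W R S \<sigma> l \<sigma>'; finite S; B1 \<sigma>; B2 S \<sigma>\<rbrakk> \<Longrightarrow> B2 S \<sigma>'"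
  unfolding B1_def B2_def by (erule stepE; auto split: if_splits dest!: in_diffD; (fastforce intro: le_SucI)?)
lemma B3_step: "\<lbrakk>step W R S \<sigma> l \<sigma>'; finite S; B3 \<sigma>\<rbrakk> \<Longrightarrow> B3 \<sigma>'"
  unfolding B3_def by (erule stepE; auto split: if_splits dest!: in_diffD; (fastforce intro: le_SucI)?)
lemma B4_step: "\<lbrakk>step W R S \<sigma> l \<sigma>'; finite S; B3 \<sigma>; B4 S \<sigma>\<rbrakk> \<Longrightarrow> B4 S \<sigma>'"
  unfolding B3_def B4_def by (erule stepE; auto split: if_splits dest!: in_diffD; (fastforce intro: le_SucI)?)
lemma B5_step: "\<lbrakk>step W R S \<sigma> l \<sigma>'; finite S; B5 \<sigma>\<rbrakk> \<Longrightarrow> B5 \<sigma>'"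
  unfolding B5_def by (erule stepE; auto split: if_splits dest!: in_diffD; (fastforce intro: le_SucI)?)
lemma B6_step: "\<lbrakk>step W R S \<sigma> l \<sigma>'; finite S; B5 \<sigma>; B6 S \<sigma>\<rbrakk> \<Longrightarrow> B6 S \<sigma>'"
  unfolding B5_def B6_def by (erule stepE; auto split: if_splits dest!: in_diffD; (fastforce intro: le_SucI)?)
lemma B7_step: "\<lbrakk>step W R S \<sigma> l \<sigma>'; finite S; B6 S \<sigma>; B7 S \<sigma>\<rbrakk> \<Longrightarrow> B7 S \<sigma>'"
  unfolding B6_def B7_def by (erule stepE; auto split: if_splits dest!: in_diffD; (fastforce intro: le_SucI)?)
lemma B8_step: "\<lbrakk>step W R S \<sigma> l \<sigma>'; finite S; B6 S \<sigma>; B8 S \<sigma>\<rbrakk> \<Longrightarrow> B8 S \<sigma>'"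
  unfolding B6_def B8_def by (erule stepE; auto split: if_splits dest!: in_diffD; (fastforce intro: le_SucI)?)
lemma B9_step: "\<lbrakk>step W R S \<sigma> l \<sigma>'; finite S; B2 S \<sigma>; B9 S \<sigma>\<rbrakk> \<Longrightarrow> B9 S \<sigma>'"
  unfolding B2_def B9_def by (erule stepE; auto split: if_splits dest!: in_diffD; (fastforce intro: le_SucI)?)
lemma B10_step: "\<lbrakk>step W R S \<sigma> l \<sigma>'; finite S; B4 S \<sigma>; B10 S \<sigma>\<rbrakk> \<Longrightarrow> B10 S \<sigma>'"
  unfolding B4_def B10_def by (erule stepE; auto split: if_splits dest!: in_diffD; (fastforce intro: le_SucI)?)
lemma B11_step: "\<lbrakk>step W R S \<sigma> l \<sigma>'; finite S; B7 S \<sigma>; B11 S \<sigma>\<rbrakk> \<Longrightarrow> B11 S \<sigma>'"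
  unfolding B7_def B11_def by (erule stepE; auto split: if_splits dest!: in_diffD; (fastforce intro: le_SucI)?)
lemma B12_step: "\<lbrakk>step W R S \<sigma> l \<sigma>'; finite S; B3 \<sigma>; B12 \<sigma>\<rbrakk> \<Longrightarrow> B12 \<sigma>'"
  unfolding B3_def B12_def by (erule stepE; auto split: if_splits dest!: in_diffD; (fastforce intro: le_SucI)?)

lemma binv_step: "\<lbrakk>step W R S \<sigma> l \<sigma>'; finite S; binv S \<sigma>\<rbrakk> \<Longrightarrow> binv S \<sigma>'"
  unfolding binv_def using B1_step B2_step B3_step B4_step B5_step B6_step B7_step B8_step
    B9_step B10_step B11_step B12_step by metis

lemma stag_mono: "step W R S \<sigma> l \<sigma>' \<Longrightarrow> stag \<sigma> s \<le> stag \<sigma>' s"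
  by (erule stepE; auto split: if_splits)
lemma wop_mono: "step W R S \<sigma> l \<sigma>' \<Longrightarrow> wop \<sigma> w \<le> wop \<sigma>' w"
  by (erule stepE; auto split: if_splits)
lemma rop_mono: "step W R S \<sigma> l \<sigma>' \<Longrightarrow> rop \<sigma> w \<le> rop \<sigma>' w"
  by (erule stepE; auto split: if_splits)
lemma crashed_mono: "step W R S \<sigma> l \<sigma>' \<Longrightarrow> crashed \<sigma> \<subseteq> crashed \<sigma>'"
  by (erule stepE; auto split: if_splits)

type_synonym ('p,'v) ghost = "'p \<Rightarrow> nat \<Rightarrow> ('p tag \<times> 'v option) option"

definition gupd :: "'p set \<Rightarrow> 'p set \<Rightarrow> ('p,'v) gstate \<Rightarrow> ('p,'v) label \<Rightarrow> ('p,'v) ghost \<Rightarrow> ('p,'v) ghost" where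
 "gupd W S \<sigma> l Gm = (case l of Dlv pk ro \<Rightarrow> (case ro of None \<Rightarrow> (case pk of (src, w, m) \<Rightarrow>
    (case m of DiscoverAck t v k s \<Rightarrow> (case wph \<sigma> w of WDisc x A \<Rightarrow>
       if w \<in> W \<and> k = wop \<sigma> w \<and> quorum S \<le> card (dom (A(s \<mapsto> t)))
       then Gm(w := (Gm w)(Suc k := Some ((Suc (Max (fst ` ran (A(s \<mapsto> t)))), w), Some x))) else Gm
     | _ \<Rightarrow> Gm) | _ \<Rightarrow> Gm)) | Some _ \<Rightarrow> Gm) | _ \<Rightarrow> Gm)"

definition good :: "('p,'v) ghost \<Rightarrow> 'p tag \<Rightarrow> 'v option \<Rightarrow> bool" where
 "good Gm t v \<longleftrightarrow> (fst t = 0 \<and> v = None) \<or> (\<exists>k. Gm (snd t) k = Some (t, v))"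

definition "G1 Gm \<sigma> \<longleftrightarrow> (\<forall>w. Gm w 0 = None \<and> (\<forall>k. Gm w k \<noteq> None \<longrightarrow> k \<le> wop \<sigma> w))"
definition "G2 (Gm::('p,'v) ghost) \<longleftrightarrow> (\<forall>w k tg vv. Gm w k = Some (tg,vv) \<longrightarrow> snd tg = w \<and> 0 < fst tg \<and> vv \<noteq> None)"

lemma gupd_mono:
  assumes "step W R S \<sigma> l \<sigma>'" "G1 Gm \<sigma>" "Gm w k = Some p"
  shows "gupd W S \<sigma> l Gm w k = Some p"
proof -
  have "k \<le> wop \<sigma> w" using assms(2,3) unfolding G1_def by (metis option.simps(3))
  show ?thesis using assms(1) \<open>k \<le> wop \<sigma> w\<close> assms(3)
    by (cases rule: step.cases) (auto simp: gupd_def handled_def split: wphase.splits msg.splits)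
qed

lemma good_mono: "(\<And>w k p. Gm w k = Some p \<Longrightarrow> Gm' w k = Some p) \<Longrightarrow> good Gm t v \<Longrightarrow> good Gm' t v"
  unfolding good_def by blast

lemma G1_step: "\<lbrakk>step W R S \<sigma> l \<sigma>'; G1 Gm \<sigma>\<rbrakk> \<Longrightarrow> G1 (gupd W S \<sigma> l Gm) \<sigma>'"
  unfolding G1_def by (erule stepE; auto simp: gupd_def handled_def split: wphase.splits if_splits msg.splits; (fastforce intro: le_SucI)?)

lemma G2_step: "\<lbrakk>step W R S \<sigma> l \<sigma>'; G2 Gm\<rbrakk> \<Longrightarrow> G2 (gupd W S \<sigma> l Gm)"
  unfolding G2_def by (erule stepE; auto simp: gupd_def handled_def split: wphase.splits if_splits msg.splits)



lemma good_gupd: "step W R S \<sigma> l \<sigma>' \<Longrightarrow> G1 Gm \<sigma> \<Longrightarrow> good Gm t v \<Longrightarrow> good (gupd W S \<sigma> l Gm) t v"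
  by (rule good_mono[where Gm=Gm]) (auto intro: gupd_mono)

lemma gupd_mono': "step W R S \<sigma> l \<sigma>' \<Longrightarrow> G1 Gm \<sigma> \<Longrightarrow> Gm w k = Some (a,b) \<Longrightarrow> gupd W S \<sigma> l Gm w k = Some (a,b)"
  by (rule gupd_mono)

definition "G3 Gm \<sigma> \<longleftrightarrow> (\<forall>s. good Gm (stag \<sigma> s) (sval \<sigma> s))"
definition "G4 Gm \<sigma> \<longleftrightarrow> (\<forall>src d t v k w. (src,d,WriteRequest t v k w) \<in># net \<sigma> \<longrightarrow> Gm w k = Some (t,v))"
definition "G5 Gm \<sigma> \<longleftrightarrow> (\<forall>src d t v k s. (src,d,WriteAck t v k s) \<in># net \<sigma> \<longrightarrow> k = wop \<sigma> d \<longrightarrow>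
     (\<exists>tg vv. Gm d k = Some (tg,vv) \<and> tg \<le> stag \<sigma> s))"
definition "G6 Gm \<sigma> \<longleftrightarrow> (\<forall>s w. 0 < swops \<sigma> s w \<longrightarrow> (\<exists>tg vv. Gm w (swops \<sigma> s w) = Some (tg,vv) \<and> tg \<le> stag \<sigma> s))"
definition "G7 Gm \<sigma> \<longleftrightarrow> (\<forall>w A. wph \<sigma> w = WWrite A \<longrightarrow> (\<exists>tg vv. Gm w (wop \<sigma> w) = Some (tg,vv) \<and> (\<forall>s\<in>A. tg \<le> stag \<sigma> s)))"
definition "G8 Gm \<sigma> \<longleftrightarrow> (\<forall>src d t v rid s. (src,d,ReadRelay t v rid s) \<in># net \<sigma> \<longrightarrow> good Gm t v)"
definition "G9 Gm \<sigma> \<longleftrightarrow> (\<forall>src d t v rid s. (src,d,ReadAck t v rid s) \<in># net \<sigma> \<longrightarrow> good Gm t v \<and> t \<le> stag \<sigma> s)"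
definition "G10 Gm \<sigma> \<longleftrightarrow> (\<forall>r A s t v. rph \<sigma> r = RWait A \<longrightarrow> A s = Some (t,v) \<longrightarrow> good Gm t v \<and> t \<le> stag \<sigma> s)"

declare split_paired_All[simp del] split_paired_Ex[simp del]

lemma G3_step:
  assumes st: "step W R S \<sigma> l \<sigma>'" and gm: "\<And>t v. good Gm t v \<Longrightarrow> good (gupd W S \<sigma> l Gm) t v"
   and g2: "G2 Gm" and g3: "G3 Gm \<sigma>" and g4: "G4 Gm \<sigma>" and g8: "G8 Gm \<sigma>"
  shows "G3 (gupd W S \<sigma> l Gm) \<sigma>'"
  using st
proof (cases rule: step.cases)
  case (srv_write src s t v k w \<sigma>1)
  have "Gm w k = Some (t, v)" using g4 srv_write unfolding G4_def by blast
  with g2 have "good Gm t v" unfolding good_def G2_def by (metis)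
  then show ?thesis using srv_write g3 gm unfolding G3_def by auto
next
  case (srv_relay src s t v rid s' \<sigma>1 \<sigma>2 \<sigma>3)
  have "good Gm t v" using g8 srv_relay unfolding G8_def by blast
  then show ?thesis using srv_relay g3 gm unfolding G3_def by auto
qed (use g3 gm in \<open>auto simp: G3_def\<close>)


lemma gupd_dd: "wph \<sigma> w = WDisc x A \<Longrightarrow> w \<in> W \<Longrightarrow> quorum S \<le> card (dom (A(s\<mapsto>t))) \<Longrightarrow>
  gupd W S \<sigma> (Dlv (src,w,DiscoverAck t v (wop \<sigma> w) s) None) Gm =
   Gm(w := (Gm w)(Suc (wop \<sigma> w) := Some ((Suc (Max (fst ` ran (A(s\<mapsto>t)))), w), Some x)))"
  by (simp add: gupd_def)

lemma G4_step:
  assumes st: "step W R S \<sigma> l \<sigma>'" and fin: "finite S"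
   and gm: "\<And>w k p. Gm w k = Some p \<Longrightarrow> gupd W S \<sigma> l Gm w k = Some p"
   and g4: "G4 Gm \<sigma>" and b: "binv S \<sigma>"
  shows "G4 (gupd W S \<sigma> l Gm) \<sigma>'"
  using st
proof (cases rule: step.cases)
  case (wr_dack_done src w t v k s x A A' maxTS k')
  have b3: "B3 \<sigma>" using b by (simp add: binv_def)
  then show ?thesis using wr_dack_done g4 gm fin unfolding G4_def B3_def
    by (auto simp: gupd_dd dest!: in_diffD; metis Suc_n_not_le_n)
qed (use g4 gm fin in \<open>auto simp: G4_def split: if_splits dest!: in_diffD\<close>)


lemma net_WAck:
  assumes "step W R S \<sigma> l \<sigma>'" "finite S" "(src,d,WriteAck t v k s) \<in># net \<sigma>'"
  shows "(src,d,WriteAck t v k s) \<in># net \<sigma> \<or>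
    (\<exists>src' t0 v0. l = Dlv (src', s, WriteRequest t0 v0 k d) None \<and> (src', s, WriteRequest t0 v0 k d) \<in># net \<sigma>
       \<and> src = s \<and> s \<in> S \<and> t = stag \<sigma>' s \<and> v = sval \<sigma>' s
       \<and> ((stag \<sigma> s < t0 \<and> swops \<sigma> s d < k \<and> t = t0 \<and> swops \<sigma>' s d = k) \<or> (\<not>(stag \<sigma> s < t0 \<and> swops \<sigma> s d < k) \<and> t = stag \<sigma> s)))"
  using assms(1)
proof (cases rule: step.cases)
  case (srv_relay src s t v rid s' \<sigma>1 \<sigma>2 \<sigma>3)
  then show ?thesis using assms(3) by (auto split: if_splits dest: in_diffD)
qed (use assms(2,3) in \<open>auto split: if_splits dest: in_diffD\<close>)

lemma G5_step:
  assumes st: "step W R S \<sigma> l \<sigma>'" and fin: "finite S"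
   and gm: "\<And>w k p. Gm w k = Some p \<Longrightarrow> gupd W S \<sigma> l Gm w k = Some p"
   and b: "binv S \<sigma>" and g1: "G1 Gm \<sigma>" and g4: "G4 Gm \<sigma>" and g5: "G5 Gm \<sigma>" and g6: "G6 Gm \<sigma>"
  shows "G5 (gupd W S \<sigma> l Gm) \<sigma>'"
  unfolding G5_def
proof (intro allI impI)
  fix src d t v k s
  assume m: "(src, d, WriteAck t v k s) \<in># net \<sigma>'" and kk: "k = wop \<sigma>' d"
  have sm: "\<And>s. stag \<sigma> s \<le> stag \<sigma>' s" using st by (rule stag_mono)
  have wm: "wop \<sigma> d \<le> wop \<sigma>' d" using st by (rule wop_mono)
  have b4: "B4 S \<sigma>" and b12: "B12 \<sigma>" using b by (auto simp: binv_def)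
  from net_WAck[OF st fin m] show "\<exists>tg vv. gupd W S \<sigma> l Gm d k = Some (tg, vv) \<and> tg \<le> stag \<sigma>' s"
  proof
    assume o: "(src, d, WriteAck t v k s) \<in># net \<sigma>"
    with b4 have "k \<le> wop \<sigma> d" unfolding B4_def by blast
    with wm kk have "k = wop \<sigma> d" by simp
    then obtain tg vv where "Gm d k = Some (tg,vv)" "tg \<le> stag \<sigma> s" using g5 o unfolding G5_def by blast
    then show ?thesis using gm sm order_trans by blast
  next
    assume "\<exists>src' t0 v0. l = Dlv (src', s, WriteRequest t0 v0 k d) None \<and> (src', s, WriteRequest t0 v0 k d) \<in># net \<sigma>
       \<and> src = s \<and> s \<in> S \<and> t = stag \<sigma>' s \<and> v = sval \<sigma>' s
       \<and> ((stag \<sigma> s < t0 \<and> swops \<sigma> s d < k \<and> t = t0 \<and> swops \<sigma>' s d = k) \<or> (\<not>(stag \<sigma> s < t0 \<and> swops \<sigma> s d < k) \<and> t = stag \<sigma> s))"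
    then obtain src' t0 v0 where l: "l = Dlv (src', s, WriteRequest t0 v0 k d) None"
      and req0: "(src', s, WriteRequest t0 v0 k d) \<in># net \<sigma>" and tt: "t = stag \<sigma>' s"
      and c: "(stag \<sigma> s < t0 \<and> swops \<sigma> s d < k \<and> t = t0) \<or> (\<not>(stag \<sigma> s < t0 \<and> swops \<sigma> s d < k) \<and> t = stag \<sigma> s)"
      by blast
    have req: "Gm d k = Some (t0, v0)" using g4 req0 unfolding G4_def by blast
    have wq: "wop \<sigma>' d = wop \<sigma> d" using st l by (cases rule: step.cases) auto
    have "t0 \<le> stag \<sigma> s" if nc: "\<not>(stag \<sigma> s < t0 \<and> swops \<sigma> s d < k)" and lt: "stag \<sigma> s < t0"
    proof -
      have "k \<le> swops \<sigma> s d" using nc lt by auto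
      moreover have "swops \<sigma> s d \<le> k" using b12 kk wq unfolding B12_def by auto
      moreover have "0 < k" using g1 req unfolding G1_def by (metis gr0I option.simps(3))
      ultimately have e: "swops \<sigma> s d = k" "0 < swops \<sigma> s d" by auto
      then obtain tg vv where "Gm d k = Some (tg, vv)" "tg \<le> stag \<sigma> s" using g6 unfolding G6_def by metis
      then show ?thesis using req by simp
    qed
    then have "t0 \<le> t" using c by force
    then show ?thesis using req gm tt by blast
  qed
qed


lemma swops_frame:
  assumes "step W R S \<sigma> l \<sigma>'"
  shows "swops \<sigma>' = swops \<sigma> \<or> (\<exists>src s t v k w. l = Dlv (src,s,WriteRequest t v k w) None \<and> (src,s,WriteRequest t v k w) \<in># net \<sigma>
     \<and> stag \<sigma> s < t \<and> swops \<sigma> s w < k \<and> swops \<sigma>' = (swops \<sigma>)(s := (swops \<sigma> s)(w := k)) \<and> stag \<sigma>' s = t)"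
  using assms by (cases rule: step.cases) (auto split: if_splits)

lemma G6_step:
  assumes st: "step W R S \<sigma> l \<sigma>'"
   and gm: "\<And>w k p. Gm w k = Some p \<Longrightarrow> gupd W S \<sigma> l Gm w k = Some p"
   and g4: "G4 Gm \<sigma>" and g6: "G6 Gm \<sigma>"
  shows "G6 (gupd W S \<sigma> l Gm) \<sigma>'"
  unfolding G6_def
proof (intro allI impI)
  fix s w assume pos: "0 < swops \<sigma>' s w"
  have sm: "\<And>s. stag \<sigma> s \<le> stag \<sigma>' s" using st by (rule stag_mono)
  have old: "\<exists>tg vv. gupd W S \<sigma> l Gm w (swops \<sigma> s w) = Some (tg, vv) \<and> tg \<le> stag \<sigma>' s" if p0: "0 < swops \<sigma> s w"
  proof -
    obtain tg vv where "Gm w (swops \<sigma> s w) = Some (tg,vv)" "tg \<le> stag \<sigma> s" using g6 p0 unfolding G6_def by blast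
    then show ?thesis using gm sm order_trans by blast
  qed
  from swops_frame[OF st] show "\<exists>tg vv. gupd W S \<sigma> l Gm w (swops \<sigma>' s w) = Some (tg, vv) \<and> tg \<le> stag \<sigma>' s"
  proof
    assume "swops \<sigma>' = swops \<sigma>" then show ?thesis using old pos by simp
  next
    assume "\<exists>src s t v k w. l = Dlv (src,s,WriteRequest t v k w) None \<and> (src,s,WriteRequest t v k w) \<in># net \<sigma>
     \<and> stag \<sigma> s < t \<and> swops \<sigma> s w < k \<and> swops \<sigma>' = (swops \<sigma>)(s := (swops \<sigma> s)(w := k)) \<and> stag \<sigma>' s = t"
    then obtain src s0 t v k w0 where h: "(src,s0,WriteRequest t v k w0) \<in># net \<sigma>"
      "swops \<sigma>' = (swops \<sigma>)(s0 := (swops \<sigma> s0)(w0 := k))" "stag \<sigma>' s0 = t" by blast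
    have req: "Gm w0 k = Some (t, v)" using g4 h(1) unfolding G4_def by blast
    show ?thesis
    proof (cases "s = s0 \<and> w = w0")
      case True then show ?thesis using h req gm by auto
    next
      case False
      then have "swops \<sigma>' s w = swops \<sigma> s w" using h(2) by auto
      then show ?thesis using old pos by simp
    qed
  qed
qed



lemma wfr:
  assumes "step W R S \<sigma> l \<sigma>'"
  shows "(wph \<sigma>' = wph \<sigma> \<and> wop \<sigma>' = wop \<sigma>) \<or> (\<exists>w v. l = Inv w (OWrite v)) \<or>
    (\<exists>src w t v k s. l = Dlv (src,w,DiscoverAck t v k s) None) \<or> (\<exists>src w t v k s r. l = Dlv (src,w,WriteAck t v k s) r)"
  using assms by (cases rule: step.cases) (auto split: if_splits)

lemma rfr:
  assumes "step W R S \<sigma> l \<sigma>'"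
  shows "(rph \<sigma>' = rph \<sigma> \<and> rop \<sigma>' = rop \<sigma>) \<or> (\<exists>r. l = Inv r ORead) \<or>
    (\<exists>src r t v rid s ro. l = Dlv (src,r,ReadAck t v rid s) ro)"
  using assms by (cases rule: step.cases) (auto split: if_splits)

lemma G7_step:
  assumes st: "step W R S \<sigma> l \<sigma>'"
   and gm: "\<And>w k p. Gm w k = Some p \<Longrightarrow> gupd W S \<sigma> l Gm w k = Some p"
   and g5: "G5 Gm \<sigma>" and g7: "G7 Gm \<sigma>"
  shows "G7 (gupd W S \<sigma> l Gm) \<sigma>'"
proof -
  have sm: "\<And>s. stag \<sigma> s \<le> stag \<sigma>' s" using st by (rule stag_mono)
  have old: "\<exists>tg vv. gupd W S \<sigma> l Gm w (wop \<sigma> w) = Some (tg, vv) \<and> (\<forall>s\<in>A. tg \<le> stag \<sigma>' s)"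
    if p0: "wph \<sigma> w = WWrite A" for w A
  proof -
    obtain tg vv where "Gm w (wop \<sigma> w) = Some (tg,vv)" "\<forall>s\<in>A. tg \<le> stag \<sigma> s" using g7 p0 unfolding G7_def by blast
    then show ?thesis using gm sm order_trans by blast
  qed
  from wfr[OF st] consider (u) "wph \<sigma>' = wph \<sigma> \<and> wop \<sigma>' = wop \<sigma>" | (i) "\<exists>w v. l = Inv w (OWrite v)" |
    (d) "\<exists>src w t v k s. l = Dlv (src,w,DiscoverAck t v k s) None" | (a) "\<exists>src w t v k s r. l = Dlv (src,w,WriteAck t v k s) r"
    by blast
  then show ?thesis
  proof cases
    case u then show ?thesis using old unfolding G7_def by simp
  next
    case i show ?thesis using st i old unfolding G7_def by (cases rule: step.cases) (auto simp: gupd_def)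
  next
    case d
    from st show ?thesis
    proof (cases rule: step.cases)
      case (wr_dack_done src w t v k s x A A' maxTS k')
      show ?thesis unfolding G7_def
      proof (intro allI impI)
        fix w' A0 assume h: "wph \<sigma>' w' = WWrite A0"
        show "\<exists>tg vv. gupd W S \<sigma> l Gm w' (wop \<sigma>' w') = Some (tg, vv) \<and> (\<forall>s\<in>A0. tg \<le> stag \<sigma>' s)"
        proof (cases "w' = w")
          case True then show ?thesis using wr_dack_done h by (auto simp: gupd_dd)
        next
          case False
          then have "wph \<sigma> w' = WWrite A0" "wop \<sigma>' w' = wop \<sigma> w'" using wr_dack_done h by auto
          then show ?thesis using old by simp
        qed
      qed
    qed (use old d in \<open>auto simp: G7_def\<close>)
  next
    case a
    from st show ?thesis
    proof (cases rule: step.cases)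
      case (wr_wack_wait src w t v k s A A')
      obtain tg vv where "Gm w k = Some (tg,vv)" "tg \<le> stag \<sigma> s" using g5 wr_wack_wait unfolding G5_def by blast
      note tv = this
      show ?thesis unfolding G7_def
      proof (intro allI impI)
        fix w' A0 assume h: "wph \<sigma>' w' = WWrite A0"
        have wq: "wop \<sigma>' w' = wop \<sigma> w'" using wr_wack_wait by auto
        show "\<exists>tg vv. gupd W S \<sigma> l Gm w' (wop \<sigma>' w') = Some (tg, vv) \<and> (\<forall>s\<in>A0. tg \<le> stag \<sigma>' s)"
        proof (cases "w' = w")
          case True
          then have A0: "A0 = insert s A" using wr_wack_wait h by auto
          obtain tg' vv' where o: "gupd W S \<sigma> l Gm w (wop \<sigma> w) = Some (tg', vv')" "\<forall>s\<in>A. tg' \<le> stag \<sigma>' s"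
            using old wr_wack_wait by blast
          have "gupd W S \<sigma> l Gm w k = Some (tg, vv)" using gm tv by blast
          then have "tg' = tg" using o wr_wack_wait by simp
          then show ?thesis using o A0 True wq tv(2) sm[of s] wr_wack_wait order_trans by auto
        next
          case False
          then have "wph \<sigma> w' = WWrite A0" using wr_wack_wait h by auto
          then show ?thesis using old wq by simp
        qed
      qed
    qed (use old a in \<open>auto simp: G7_def\<close>)
  qed
qed


lemma net_Relay:
  assumes "step W R S \<sigma> l \<sigma>'" "finite S" "(src,d,ReadRelay t v rid s) \<in># net \<sigma>'"
  shows "(src,d,ReadRelay t v rid s) \<in># net \<sigma> \<or>
    (\<exists>src'. l = Dlv (src', s, ReadRequest rid) None \<and> (src', s, ReadRequest rid) \<in># net \<sigma>
       \<and> src = s \<and> s \<in> S \<and> d \<in> S \<and> t = stag \<sigma> s \<and> v = sval \<sigma> s)"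
  using assms(1)
proof (cases rule: step.cases)
  case (srv_relay src s t v rid s' \<sigma>1 \<sigma>2 \<sigma>3)
  then show ?thesis using assms(3) by (auto split: if_splits dest: in_diffD)
qed (use assms(2,3) in \<open>auto split: if_splits dest: in_diffD\<close>)

lemma net_RAck:
  assumes "step W R S \<sigma> l \<sigma>'" "finite S" "(src,d,ReadAck t v rid s) \<in># net \<sigma>'"
  shows "(src,d,ReadAck t v rid s) \<in># net \<sigma> \<or>
    (\<exists>src' t' v' s'. l = Dlv (src', s, ReadRelay t' v' rid s') None \<and> (src', s, ReadRelay t' v' rid s') \<in># net \<sigma>
       \<and> src = s \<and> d = fst rid \<and> s \<in> S \<and> t = stag \<sigma>' s \<and> v = sval \<sigma>' s \<and> quorum S \<le> card (srelays \<sigma>' s rid)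
       \<and> srelays \<sigma>' s rid = insert s' (srelays \<sigma> s rid)
       \<and> stag \<sigma>' s = max (stag \<sigma> s) t')"
  using assms(1)
proof (cases rule: step.cases)
  case (srv_relay src s t v rid s' \<sigma>1 \<sigma>2 \<sigma>3)
  then show ?thesis using assms(3) by (auto split: if_splits dest: in_diffD simp: max_def)
qed (use assms(2,3) in \<open>auto split: if_splits dest: in_diffD\<close>)

lemma net_DAck:
  assumes "step W R S \<sigma> l \<sigma>'" "finite S" "(src,d,DiscoverAck t v k s) \<in># net \<sigma>'"
  shows "(src,d,DiscoverAck t v k s) \<in># net \<sigma> \<or>
    (\<exists>src'. l = Dlv (src', s, Discover k d) None \<and> (src', s, Discover k d) \<in># net \<sigma>
       \<and> src = s \<and> s \<in> S \<and> t = stag \<sigma> s \<and> v = sval \<sigma> s)"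
  using assms(1)
proof (cases rule: step.cases)
  case (srv_relay src s t v rid s' \<sigma>1 \<sigma>2 \<sigma>3)
  then show ?thesis using assms(3) by (auto split: if_splits dest: in_diffD)
qed (use assms(2,3) in \<open>auto split: if_splits dest: in_diffD\<close>)

lemma net_Disc:
  assumes "step W R S \<sigma> l \<sigma>'" "finite S" "(src,d,Discover k w) \<in># net \<sigma>'"
  shows "(src,d,Discover k w) \<in># net \<sigma> \<or> ((\<exists>v. l = Inv w (OWrite v)) \<and> src = w \<and> d \<in> S \<and> k = wop \<sigma>' w \<and> w \<notin> crashed \<sigma>)"
  using assms(1)
proof (cases rule: step.cases)
  case (srv_relay src s t v rid s' \<sigma>1 \<sigma>2 \<sigma>3)
  then show ?thesis using assms(3) by (auto split: if_splits dest: in_diffD)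
qed (use assms(2,3) in \<open>auto split: if_splits dest: in_diffD\<close>)

lemma net_RReq:
  assumes "step W R S \<sigma> l \<sigma>'" "finite S" "(src,d,ReadRequest rid) \<in># net \<sigma>'"
  shows "(src,d,ReadRequest rid) \<in># net \<sigma> \<or> (l = Inv (fst rid) ORead \<and> src = fst rid \<and> d \<in> S \<and> snd rid = rop \<sigma>' (fst rid))"
  using assms(1)
proof (cases rule: step.cases)
  case (srv_relay src s t v rid s' \<sigma>1 \<sigma>2 \<sigma>3)
  then show ?thesis using assms(3) by (auto split: if_splits dest: in_diffD)
qed (use assms(2,3) in \<open>auto split: if_splits dest: in_diffD\<close>)

lemma net_WReq:
  assumes "step W R S \<sigma> l \<sigma>'" "finite S" "(src,d,WriteRequest t v k w) \<in># net \<sigma>'"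
  shows "(src,d,WriteRequest t v k w) \<in># net \<sigma> \<or> (src = w \<and> d \<in> S \<and> k = wop \<sigma>' w)"
  using assms(1)
proof (cases rule: step.cases)
  case (srv_relay src s t v rid s' \<sigma>1 \<sigma>2 \<sigma>3)
  then show ?thesis using assms(3) by (auto split: if_splits dest: in_diffD)
qed (use assms(2,3) in \<open>auto split: if_splits dest: in_diffD\<close>)

lemma G8_step:
  assumes st: "step W R S \<sigma> l \<sigma>'" and fin: "finite S"
   and gm: "\<And>t v. good Gm t v \<Longrightarrow> good (gupd W S \<sigma> l Gm) t v"
   and g3: "G3 Gm \<sigma>" and g8: "G8 Gm \<sigma>"
  shows "G8 (gupd W S \<sigma> l Gm) \<sigma>'"
  unfolding G8_def
proof (intro allI impI)
  fix src d t v rid s assume m: "(src, d, ReadRelay t v rid s) \<in># net \<sigma>'"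
  from net_Relay[OF st fin m] show "good (gupd W S \<sigma> l Gm) t v"
    using g3 g8 gm unfolding G3_def G8_def by blast
qed

lemma G9_step:
  assumes st: "step W R S \<sigma> l \<sigma>'" and fin: "finite S"
   and gm: "\<And>t v. good Gm t v \<Longrightarrow> good (gupd W S \<sigma> l Gm) t v"
   and g3': "G3 (gupd W S \<sigma> l Gm) \<sigma>'" and g9: "G9 Gm \<sigma>"
  shows "G9 (gupd W S \<sigma> l Gm) \<sigma>'"
  unfolding G9_def
proof (intro allI impI)
  fix src d t v rid s assume m: "(src, d, ReadAck t v rid s) \<in># net \<sigma>'"
  have sm: "stag \<sigma> s \<le> stag \<sigma>' s" using st by (rule stag_mono)
  from net_RAck[OF st fin m] show "good (gupd W S \<sigma> l Gm) t v \<and> t \<le> stag \<sigma>' s"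
  proof
    assume "(src, d, ReadAck t v rid s) \<in># net \<sigma>"
    then show ?thesis using g9 gm sm unfolding G9_def by (meson order_trans)
  qed (use g3' in \<open>auto simp: G3_def\<close>)
qed

lemma G10_step:
  assumes st: "step W R S \<sigma> l \<sigma>'"
   and gm: "\<And>t v. good Gm t v \<Longrightarrow> good (gupd W S \<sigma> l Gm) t v"
   and g9: "G9 Gm \<sigma>" and g10: "G10 Gm \<sigma>"
  shows "G10 (gupd W S \<sigma> l Gm) \<sigma>'"
proof -
  have sm: "\<And>s. stag \<sigma> s \<le> stag \<sigma>' s" using st by (rule stag_mono)
  have old: "good (gupd W S \<sigma> l Gm) t v \<and> t \<le> stag \<sigma>' s" if "rph \<sigma> r = RWait A" "A s = Some (t,v)" for r A s t v
    using g10 that gm sm unfolding G10_def by (meson order_trans)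
  from rfr[OF st] consider (u) "rph \<sigma>' = rph \<sigma> \<and> rop \<sigma>' = rop \<sigma>" | (i) "\<exists>r. l = Inv r ORead" |
    (a) "\<exists>src r t v rid s ro. l = Dlv (src,r,ReadAck t v rid s) ro" by blast
  then show ?thesis
  proof cases
    case u then show ?thesis using old unfolding G10_def by simp
  next
    case i show ?thesis using st i old unfolding G10_def by (cases rule: step.cases) auto
  next
    case a
    from st show ?thesis
    proof (cases rule: step.cases)
      case (rd_ack_wait src r t v rid s A A')
      have "good Gm t v" "t \<le> stag \<sigma> s" using g9 rd_ack_wait unfolding G9_def by blast+
      then have n: "good (gupd W S \<sigma> l Gm) t v" "t \<le> stag \<sigma>' s" using gm sm order_trans by blast+
      show ?thesis unfolding G10_def
      proof (intro allI impI)
        fix r' A0 s' t' v' assume h: "rph \<sigma>' r' = RWait A0" "A0 s' = Some (t', v')"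
        show "good (gupd W S \<sigma> l Gm) t' v' \<and> t' \<le> stag \<sigma>' s'"
        proof (cases "r' = r")
          case True
          then have "A0 = A(s \<mapsto> (t,v))" using h rd_ack_wait by auto
          then show ?thesis using h n old rd_ack_wait True by (auto split: if_splits)
        next
          case False then show ?thesis using h old rd_ack_wait by auto
        qed
      qed
    qed (use old a in \<open>auto simp: G10_def\<close>)
  qed
qed


definition "ginv Gm \<sigma> \<longleftrightarrow> G1 Gm \<sigma> \<and> G2 Gm \<and> G3 Gm \<sigma> \<and> G4 Gm \<sigma> \<and> G5 Gm \<sigma> \<and> G6 Gm \<sigma> \<and> G7 Gm \<sigma>
   \<and> G8 Gm \<sigma> \<and> G9 Gm \<sigma> \<and> G10 Gm \<sigma>"

lemma ginv_init: "ginv (\<lambda>_ _. None) (init_state :: ('p::linorder,'v) gstate)"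
  by (simp add: ginv_def G1_def G2_def G3_def G4_def G5_def G6_def G7_def G8_def G9_def G10_def
      init_state_def good_def)

lemma ginv_step:
  assumes st: "step W R S \<sigma> l \<sigma>'" and fin: "finite S" and b: "binv S \<sigma>" and g: "ginv Gm \<sigma>"
  shows "ginv (gupd W S \<sigma> l Gm) \<sigma>'"
proof -
  have g1: "G1 Gm \<sigma>" using g by (simp add: ginv_def)
  have gm: "\<And>w k p. Gm w k = Some p \<Longrightarrow> gupd W S \<sigma> l Gm w k = Some p"
    using gupd_mono[OF st g1] by blast
  have gg: "\<And>t v. good Gm t v \<Longrightarrow> good (gupd W S \<sigma> l Gm) t v"
    using good_gupd[OF st g1] by blast
  have g3': "G3 (gupd W S \<sigma> l Gm) \<sigma>'" using G3_step[OF st gg] g by (simp add: ginv_def)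
  show ?thesis unfolding ginv_def
    using G1_step[OF st g1] G2_step[OF st] g3' G4_step[OF st fin gm] G5_step[OF st fin gm b g1]
      G6_step[OF st gm] G7_step[OF st gm] G8_step[OF st fin gg] G9_step[OF st fin gg g3'] G10_step[OF st gg]
      b g by (simp add: ginv_def)
qed

lemma wdisc_next: "step W R S \<sigma> l \<sigma>' \<Longrightarrow> wph \<sigma> w = WDisc x A \<Longrightarrow>
   (\<exists>A'. wph \<sigma>' w = WDisc x A' \<and> wop \<sigma>' w = wop \<sigma> w) \<or> (\<exists>A'. wph \<sigma>' w = WWrite A' \<and> wop \<sigma>' w = Suc (wop \<sigma> w))"
  by (erule stepE; auto split: if_splits)

lemma wwrite_next: "step W R S \<sigma> l \<sigma>' \<Longrightarrow> wph \<sigma> w = WWrite A \<Longrightarrow>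
   (\<exists>A'. wph \<sigma>' w = WWrite A' \<and> wop \<sigma>' w = wop \<sigma> w) \<or> (\<exists>src m. l = Dlv (src,w,m) (Some WResp))"
  by (erule stepE; auto split: if_splits)

lemma rwait_next: "step W R S \<sigma> l \<sigma>' \<Longrightarrow> rph \<sigma> r = RWait A \<Longrightarrow>
   (\<exists>A'. rph \<sigma>' r = RWait A' \<and> rop \<sigma>' r = rop \<sigma> r) \<or> (\<exists>src m u. l = Dlv (src,r,m) (Some (RResp u)))"
  by (erule stepE; auto split: if_splits)

lemma resp_write: "step W R S \<sigma> l \<sigma>' \<Longrightarrow> l = Dlv (src,w,m) (Some rr) \<Longrightarrow> w \<notin> R \<Longrightarrow>
   \<exists>t v k s A. m = WriteAck t v k s \<and> rr = WResp \<and> w \<in> W \<and> wph \<sigma> w = WWrite A \<and> k = wop \<sigma> w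
     \<and> quorum S \<le> card (insert s A) \<and> (src,w,m) \<in># net \<sigma> \<and> wph \<sigma>' w = WIdle"
  by (erule stepE; auto)

lemma resp_read: "step W R S \<sigma> l \<sigma>' \<Longrightarrow> l = Dlv (src,r,m) (Some rr) \<Longrightarrow> r \<notin> W \<Longrightarrow>
   \<exists>t v rid s A u. m = ReadAck t v rid s \<and> rr = RResp u \<and> r \<in> R \<and> rph \<sigma> r = RWait A \<and> rid = (r, rop \<sigma> r)
     \<and> quorum S \<le> card (dom (A(s \<mapsto> (t,v)))) \<and> (src,r,m) \<in># net \<sigma>
     \<and> (Min (fst ` ran (A(s \<mapsto> (t,v)))), u) \<in> ran (A(s \<mapsto> (t,v))) \<and> rph \<sigma>' r = RIdle"
  by (erule stepE; auto)

lemma inv_step: "step W R S \<sigma> l \<sigma>' \<Longrightarrow> l = Inv p k \<Longrightarrow>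
   (\<exists>v. k = OWrite v \<and> p \<in> W \<and> wph \<sigma> p = WIdle \<and> p \<notin> crashed \<sigma> \<and> wph \<sigma>' p = WDisc v Map.empty \<and> wop \<sigma>' p = Suc (wop \<sigma> p)
      \<and> net \<sigma>' = net \<sigma> + bcast S p (Discover (Suc (wop \<sigma> p)) p)) \<or>
   (k = ORead \<and> p \<in> R \<and> rph \<sigma> p = RIdle \<and> p \<notin> crashed \<sigma> \<and> rph \<sigma>' p = RWait Map.empty \<and> rop \<sigma>' p = Suc (rop \<sigma> p)
      \<and> net \<sigma>' = net \<sigma> + bcast S p (ReadRequest (p, Suc (rop \<sigma> p))))"
  by (erule stepE; auto)



locale ohm =
  fixes W R S :: "'p::linorder set" and f :: nat
    and \<sigma>s :: "nat \<Rightarrow> ('p,'v) gstate" and ls :: "nat \<Rightarrow> ('p,'v) label"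
  assumes disj: "W \<inter> R = {}" "W \<inter> S = {}" "R \<inter> S = {}"
    and fS: "2 * f < card S"
    and ex: "execution W R S f \<sigma>s ls"
begin

lemma finS: "finite S" using fS card.infinite by fastforce

lemma st: "step W R S (\<sigma>s i) (ls i) (\<sigma>s (Suc i))"
  using ex by (simp add: execution_def)

lemma s0: "\<sigma>s 0 = init_state" using ex by (simp add: execution_def)

primrec Gh :: "nat \<Rightarrow> ('p,'v) ghost" where
  "Gh 0 = (\<lambda>_ _. None)"
| "Gh (Suc i) = gupd W S (\<sigma>s i) (ls i) (Gh i)"

lemma binv: "binv S (\<sigma>s i)"
proof (induction i)
  case 0 show ?case by (simp add: s0 binv_init)
next
  case (Suc i) then show ?case by (rule binv_step[OF st finS])
qed

lemma ginv: "ginv (Gh i) (\<sigma>s i)"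
proof (induction i)
  case 0 show ?case by (simp add: s0 ginv_init)
next
  case (Suc i) then show ?case by (simp only: Gh.simps) (rule ginv_step[OF st finS binv])
qed

lemma mono_gen: fixes P :: "('p,'v) gstate \<Rightarrow> 'b::preorder" assumes "\<And>i. P (\<sigma>s i) \<le> P (\<sigma>s (Suc i))" "i \<le> j" shows "P (\<sigma>s i) \<le> P (\<sigma>s j)"
  using assms(2)
proof (induction j)
  case (Suc j)
  show ?case
  proof (cases "i \<le> j")
    case True
    then have "P (\<sigma>s i) \<le> P (\<sigma>s j)" by (rule Suc.IH)
    then show ?thesis using assms(1)[of j] by (rule order_trans)
  next
    case False then have "i = Suc j" using Suc.prems by simp
    then show ?thesis by simp
  qed
qed simp

lemma stag_le: "i \<le> j \<Longrightarrow> stag (\<sigma>s i) s \<le> stag (\<sigma>s j) s"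
  using mono_gen[of "\<lambda>\<sigma>. stag \<sigma> s", OF stag_mono[OF st]] by simp
lemma wop_le: "i \<le> j \<Longrightarrow> wop (\<sigma>s i) s \<le> wop (\<sigma>s j) s"
  using mono_gen[of "\<lambda>\<sigma>. wop \<sigma> s", OF wop_mono[OF st]] by simp
lemma rop_le: "i \<le> j \<Longrightarrow> rop (\<sigma>s i) s \<le> rop (\<sigma>s j) s"
  using mono_gen[of "\<lambda>\<sigma>. rop \<sigma> s", OF rop_mono[OF st]] by simp
lemma crashed_le: "i \<le> j \<Longrightarrow> crashed (\<sigma>s i) \<subseteq> crashed (\<sigma>s j)"
  using mono_gen[of "\<lambda>\<sigma>. crashed \<sigma>", OF crashed_mono[OF st]] by simp

lemma Gh_mono: "i \<le> j \<Longrightarrow> Gh i w k = Some p \<Longrightarrow> Gh j w k = Some p"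
proof (induction j)
  case (Suc j)
  show ?case
  proof (cases "i \<le> j")
    case True
    then have "Gh j w k = Some p" using Suc by blast
    then show ?thesis using gupd_mono[OF st] ginv[of j] by (simp add: ginv_def)
  next
    case False then show ?thesis using Suc by (simp add: le_Suc_eq)
  qed
qed simp

lemma wdisc_trace: "wph (\<sigma>s i) w = WDisc x A \<Longrightarrow> \<exists>b<i. ls b = Inv w (OWrite x) \<and> wop (\<sigma>s (Suc b)) w = wop (\<sigma>s i) w"
proof (induction i arbitrary: A)
  case 0 then show ?case by (simp add: s0 init_state_def)
next
  case (Suc i)
  have stp: "step W R S (\<sigma>s i) (ls i) (\<sigma>s (Suc i))" by (rule st)
  show ?case
  proof (cases "\<exists>A0. wph (\<sigma>s i) w = WDisc x A0 \<and> wop (\<sigma>s (Suc i)) w = wop (\<sigma>s i) w")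
    case True
    then obtain A0 where "wph (\<sigma>s i) w = WDisc x A0" "wop (\<sigma>s (Suc i)) w = wop (\<sigma>s i) w" by blast
    then show ?thesis using Suc.IH by (metis less_SucI)
  next
    case False
    from stp Suc.prems False have "ls i = Inv w (OWrite x)"
      by (cases rule: step.cases) (auto split: if_splits)
    then show ?thesis by blast
  qed
qed

lemma Gh_trace: "Gh i w k = Some (tg, vv) \<Longrightarrow>
   \<exists>x b. b < i \<and> vv = Some x \<and> ls b = Inv w (OWrite x) \<and> Suc (wop (\<sigma>s (Suc b)) w) = k"
proof (induction i)
  case 0 then show ?case by simp
next
  case (Suc i)
  show ?case
  proof (cases "Gh i w k = Some (tg, vv)")
    case True then show ?thesis using Suc.IH less_SucI by blast
  next
    case False
    then have "Gh (Suc i) w k \<noteq> Gh i w k" using Suc.prems by simp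
    then obtain src t v s x A where l: "ls i = Dlv (src, w, DiscoverAck t v (wop (\<sigma>s i) w) s) None"
      and ph: "wph (\<sigma>s i) w = WDisc x A" and k: "k = Suc (wop (\<sigma>s i) w)" and vv: "vv = Some x"
      using Suc.prems
      by (auto simp: gupd_def split: label.splits option.splits msg.splits wphase.splits if_splits)
    obtain b where "b < i" "ls b = Inv w (OWrite x)" "wop (\<sigma>s (Suc b)) w = wop (\<sigma>s i) w"
      using wdisc_trace[OF ph] by blast
    then show ?thesis using k vv by (intro exI[of _ x] exI[of _ b]) auto
  qed
qed

definition Gfin :: "'p \<Rightarrow> nat \<Rightarrow> 'p tag \<times> 'v option" where
  "Gfin w k = (SOME p. \<exists>i. Gh i w k = Some p)"

lemma Gfin: "Gh i w k = Some p \<Longrightarrow> Gfin w k = p"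
proof -
  assume a: "Gh i w k = Some p"
  have "\<exists>i. Gh i w k = Some p" using a by blast
  moreover have "q = p" if "Gh j w k = Some q" for j q
  proof -
    have "Gh (max i j) w k = Some p" "Gh (max i j) w k = Some q"
      using Gh_mono[OF max.cobounded1[of i j] a] Gh_mono[OF max.cobounded2[of j i] that] by auto
    then show ?thesis by simp
  qed
  ultimately show ?thesis unfolding Gfin_def by (intro some_equality) blast+
qed

end


lemma prod_le_fst: "(x::nat \<times> 'a::linorder) \<le> y \<Longrightarrow> fst x \<le> fst y"
  by (cases x; cases y) auto

lemma prod_less_fst: "fst (x::nat \<times> 'a::linorder) < fst y \<Longrightarrow> x < y"
  by (cases x; cases y) auto

lemma quorum_inter:
  assumes "finite S" "A \<subseteq> S" "B \<subseteq> S" "quorum S \<le> card A" "quorum S \<le> card B"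
  shows "A \<inter> B \<noteq> {}"
proof
  assume e: "A \<inter> B = {}"
  have fa: "finite A" "finite B" using assms finite_subset by auto
  have "card (A \<union> B) = card A + card B" using card_Un_disjoint[OF fa e] .
  moreover have "card (A \<union> B) \<le> card S" using assms by (intro card_mono) auto
  ultimately show False using assms(4,5) unfolding quorum_def by linarith
qed

lemma srelays_frame:
  assumes "step W R S \<sigma> l \<sigma>'"
  shows "srelays \<sigma>' = srelays \<sigma> \<or> (\<exists>src s t' v rid s'. l = Dlv (src, s, ReadRelay t' v rid s') None
     \<and> (src,s,ReadRelay t' v rid s') \<in># net \<sigma>
     \<and> srelays \<sigma>' = (srelays \<sigma>)(s := (srelays \<sigma> s)(rid := insert s' (srelays \<sigma> s rid)))
     \<and> stag \<sigma>' s = max (stag \<sigma> s) t')"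
  using assms by (cases rule: step.cases) (auto split: if_splits simp: max_def)

definition PI :: "'p set \<Rightarrow> 'p tag \<Rightarrow> ('p \<Rightarrow> nat) \<Rightarrow> ('p \<Rightarrow> nat) \<Rightarrow> ('p::linorder,'v) ghost \<Rightarrow> ('p,'v) gstate \<Rightarrow> bool" where
 "PI Q t wop0 rop0 Gm \<sigma> \<longleftrightarrow>
 (\<forall>s\<in>Q. t \<le> stag \<sigma> s) \<and>
 (\<forall>src d t' v k s. (src,d,DiscoverAck t' v k s) \<in># net \<sigma> \<longrightarrow> wop0 d < k \<longrightarrow> s \<in> Q \<longrightarrow> t \<le> t') \<and>
 (\<forall>w x A s t'. wph \<sigma> w = WDisc x A \<longrightarrow> wop0 w < wop \<sigma> w \<longrightarrow> s \<in> Q \<longrightarrow> A s = Some t' \<longrightarrow> t \<le> t') \<and>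
 (\<forall>w k tg vv. Gm w k = Some (tg,vv) \<longrightarrow> Suc (wop0 w) < k \<longrightarrow> t < tg) \<and>
 (\<forall>src d t' v rid s'. (src,d,ReadRelay t' v rid s') \<in># net \<sigma> \<longrightarrow> rop0 (fst rid) < snd rid \<longrightarrow> s' \<in> Q \<longrightarrow> t \<le> t') \<and>
 (\<forall>s rid. srelays \<sigma> s rid \<inter> Q \<noteq> {} \<longrightarrow> rop0 (fst rid) < snd rid \<longrightarrow> t \<le> stag \<sigma> s) \<and>
 (\<forall>src d t' v rid s. (src,d,ReadAck t' v rid s) \<in># net \<sigma> \<longrightarrow> rop0 (fst rid) < snd rid \<longrightarrow> t \<le> t') \<and>
 (\<forall>r A s t' v. rph \<sigma> r = RWait A \<longrightarrow> rop0 r < rop \<sigma> r \<longrightarrow> A s = Some (t',v) \<longrightarrow> t \<le> t')"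

lemma PI_base:
  assumes "binv S \<sigma>" "G1 Gm \<sigma>" "\<forall>s\<in>Q. t \<le> stag \<sigma> s"
  shows "PI Q t (wop \<sigma>) (rop \<sigma>) Gm \<sigma>"
proof -
  have b2: "B2 S \<sigma>" and b6: "B6 S \<sigma>" and b7: "B7 S \<sigma>" and b8: "B8 S \<sigma>" using assms(1) by (auto simp: binv_def)
  have c1: "\<not> wop \<sigma> d < k" if "(src,d,DiscoverAck t' v k s) \<in># net \<sigma>" for src d t' v k s
    using b2 that unfolding B2_def by (simp add: not_less)
  have c3: "\<not> Suc (wop \<sigma> w) < k" if "Gm w k = Some p" for w k p
    using assms(2) that unfolding G1_def by (metis Suc_lessD not_less option.simps(3))
  have c4: "\<not> rop \<sigma> (fst rid) < snd rid" if "(src,d,ReadRelay t' v rid s) \<in># net \<sigma>" for src d t' v rid s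
    using b6 that unfolding B6_def by (simp add: not_less)
  have c5: "\<not> rop \<sigma> (fst rid) < snd rid" if "x \<in> srelays \<sigma> s rid" for x s rid
    using b8 that unfolding B8_def by (metis empty_iff not_less)
  have c6: "\<not> rop \<sigma> (fst rid) < snd rid" if "(src,d,ReadAck t' v rid s) \<in># net \<sigma>" for src d t' v rid s
    using b7 that unfolding B7_def by (simp add: not_less)
  show ?thesis unfolding PI_def using assms(3) by (auto dest: c1 c3 c4 c5 c6)
qed


lemma PI_step:
  assumes st: "step W R S \<sigma> l \<sigma>'" and fin: "finite S" and QS: "Q \<subseteq> S" and Qq: "quorum S \<le> card Q"
    and b: "binv S \<sigma>" and g1: "G1 Gm \<sigma>" and pi: "PI Q t wop0 rop0 Gm \<sigma>"
  shows "PI Q t wop0 rop0 (gupd W S \<sigma> l Gm) \<sigma>'"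
proof -
  have b': "binv S \<sigma>'" using binv_step[OF st fin b] .
  have sm: "\<And>s. stag \<sigma> s \<le> stag \<sigma>' s" using st by (rule stag_mono)
  note P = pi[unfolded PI_def]
  have p0: "\<forall>s\<in>Q. t \<le> stag \<sigma> s" using P[THEN conjunct1] .
  note p1 = P[THEN conjunct2, THEN conjunct1, rule_format]
  note p2 = P[THEN conjunct2, THEN conjunct2, THEN conjunct1, rule_format]
  note p3 = P[THEN conjunct2, THEN conjunct2, THEN conjunct2, THEN conjunct1, rule_format]
  note p4 = P[THEN conjunct2, THEN conjunct2, THEN conjunct2, THEN conjunct2, THEN conjunct1, rule_format]
  note p5 = P[THEN conjunct2, THEN conjunct2, THEN conjunct2, THEN conjunct2, THEN conjunct2, THEN conjunct1, rule_format]
  note p6 = P[THEN conjunct2, THEN conjunct2, THEN conjunct2, THEN conjunct2, THEN conjunct2, THEN conjunct2, THEN conjunct1, rule_format]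
  note p7 = P[THEN conjunct2, THEN conjunct2, THEN conjunct2, THEN conjunct2, THEN conjunct2, THEN conjunct2, THEN conjunct2, rule_format]
  have q0: "\<forall>s\<in>Q. t \<le> stag \<sigma>' s" using p0 sm order_trans by blast
  have q1: "t \<le> t'" if m: "(src,d,DiscoverAck t' v k s) \<in># net \<sigma>'" "wop0 d < k" "s \<in> Q" for src d t' v k s
    using net_DAck[OF st fin m(1)]
  proof
    assume "(src,d,DiscoverAck t' v k s) \<in># net \<sigma>" then show ?thesis using m(2,3) by (rule p1)
  next
    assume "\<exists>src'. l = Dlv (src', s, Discover k d) None \<and> (src', s, Discover k d) \<in># net \<sigma>
       \<and> src = s \<and> s \<in> S \<and> t' = stag \<sigma> s \<and> v = sval \<sigma> s"
    then show ?thesis using p0 m(3) by auto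
  qed
  have q2: "t \<le> t'" if m: "wph \<sigma>' w = WDisc x A" "wop0 w < wop \<sigma>' w" "s \<in> Q" "A s = Some t'" for w x A s t'
  proof -
    from wfr[OF st] consider (u) "wph \<sigma>' = wph \<sigma> \<and> wop \<sigma>' = wop \<sigma>" | (i) "\<exists>w v. l = Inv w (OWrite v)" |
      (d) "\<exists>src w t v k s. l = Dlv (src,w,DiscoverAck t v k s) None" | (a) "\<exists>src w t v k s r. l = Dlv (src,w,WriteAck t v k s) r"
      by blast
    then show ?thesis
    proof cases
      case u then show ?thesis using p2 m by auto
    next
      case i show ?thesis using st i m p2 by (cases rule: step.cases) (auto split: if_splits)
    next
      case a show ?thesis using st a m p2 by (cases rule: step.cases) (auto split: if_splits)
    next
      case d
      from st show ?thesis
      proof (cases rule: step.cases)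
        case (wr_dack_wait src w1 t1 v1 k1 s1 x1 A1 A')
        show ?thesis
        proof (cases "w = w1")
          case True
          then have A: "A = A1(s1 \<mapsto> t1)" "wop \<sigma>' w = wop \<sigma> w" using wr_dack_wait m by auto
          show ?thesis
          proof (cases "s = s1")
            case True
            then have "t' = t1" using A m by simp
            then show ?thesis using p1[of src w1 t1 v1 k1 s1] wr_dack_wait m A True \<open>w = w1\<close> by auto
          next
            case False
            then have "A1 s = Some t'" using A m by simp
            then show ?thesis using p2[of w1 x1 A1 s t'] wr_dack_wait m A \<open>w = w1\<close> by auto
          qed
        next
          case False then show ?thesis using wr_dack_wait m p2 by auto
        qed
      qed (use d m p2 in \<open>auto split: if_splits\<close>)
    qed
  qed
  have q3: "t < tg" if m: "gupd W S \<sigma> l Gm w k = Some (tg,vv)" "Suc (wop0 w) < k" for w k tg vv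
  proof (cases "Gm w k = Some (tg,vv)")
    case True then show ?thesis using p3 m by blast
  next
    case False
    then have "gupd W S \<sigma> l Gm \<noteq> Gm" using m by auto
    then obtain src t0 v0 s0 x A where l: "l = Dlv (src, w, DiscoverAck t0 v0 (wop \<sigma> w) s0) None"
      and ph: "wph \<sigma> w = WDisc x A" and k: "k = Suc (wop \<sigma> w)" and wW: "w \<in> W"
      and qa: "quorum S \<le> card (dom (A(s0 \<mapsto> t0)))"
      and tg: "tg = (Suc (Max (fst ` ran (A(s0 \<mapsto> t0)))), w)"
      using m False
      by (auto simp: gupd_def split: label.splits option.splits msg.splits wphase.splits if_splits)
    have msg: "(src, w, DiscoverAck t0 v0 (wop \<sigma> w) s0) \<in># net \<sigma>"
      using st l by (cases rule: step.cases) auto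
    have b2: "B2 S \<sigma>" and b9: "B9 S \<sigma>" using b by (auto simp: binv_def)
    have s0S: "s0 \<in> S" using b2 msg unfolding B2_def by blast
    have domS: "dom (A(s0 \<mapsto> t0)) \<subseteq> S" using b9 ph s0S unfolding B9_def by auto
    have wlt: "wop0 w < wop \<sigma> w" using m(2) k by simp
    obtain s1 where s1: "s1 \<in> dom (A(s0 \<mapsto> t0))" "s1 \<in> Q"
      using quorum_inter[OF fin domS QS qa Qq] by blast
    then obtain t1 where t1: "(A(s0 \<mapsto> t0)) s1 = Some t1" by blast
    have "t \<le> t1"
    proof (cases "s1 = s0")
      case True then show ?thesis using t1 p1[OF msg wlt] s1 by simp
    next
      case False then show ?thesis using t1 p2[OF ph wlt s1(2)] by simp
    qed
    moreover have "fst t1 \<le> Max (fst ` ran (A(s0 \<mapsto> t0)))"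
    proof (rule Max_ge)
      have "finite (dom (A(s0 \<mapsto> t0)))" using domS fin finite_subset by blast
      then show "finite (fst ` ran (A(s0 \<mapsto> t0)))" by (simp add: finite_ran)
      show "fst t1 \<in> fst ` ran (A(s0 \<mapsto> t0))" using ranI[of "A(s0 \<mapsto> t0)" s1 t1, OF t1] by (rule imageI)
    qed
    ultimately have "fst t < fst tg" using tg prod_le_fst by fastforce
    then show ?thesis by (rule prod_less_fst)
  qed
  have q4: "t \<le> t'" if m: "(src,d,ReadRelay t' v rid s') \<in># net \<sigma>'" "rop0 (fst rid) < snd rid" "s' \<in> Q" for src d t' v rid s'
    using net_Relay[OF st fin m(1)]
  proof
    assume "(src,d,ReadRelay t' v rid s') \<in># net \<sigma>" then show ?thesis using m(2,3) by (rule p4)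
  next
    assume "\<exists>src'. l = Dlv (src', s', ReadRequest rid) None \<and> (src', s', ReadRequest rid) \<in># net \<sigma>
       \<and> src = s' \<and> s' \<in> S \<and> d \<in> S \<and> t' = stag \<sigma> s' \<and> v = sval \<sigma> s'"
    then show ?thesis using p0 m(3) by auto
  qed
  have q5: "t \<le> stag \<sigma>' s" if m: "srelays \<sigma>' s rid \<inter> Q \<noteq> {}" "rop0 (fst rid) < snd rid" for s rid
  proof -
    from srelays_frame[OF st] show ?thesis
    proof
      assume "srelays \<sigma>' = srelays \<sigma>" then show ?thesis using p5 m sm order_trans by metis
    next
      assume "\<exists>src s t' v rid s'. l = Dlv (src, s, ReadRelay t' v rid s') None
       \<and> (src,s,ReadRelay t' v rid s') \<in># net \<sigma>
       \<and> srelays \<sigma>' = (srelays \<sigma>)(s := (srelays \<sigma> s)(rid := insert s' (srelays \<sigma> s rid)))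
       \<and> stag \<sigma>' s = max (stag \<sigma> s) t'"
      then obtain src s0 t' v rid0 s' where h: "(src,s0,ReadRelay t' v rid0 s') \<in># net \<sigma>"
       "srelays \<sigma>' = (srelays \<sigma>)(s0 := (srelays \<sigma> s0)(rid0 := insert s' (srelays \<sigma> s0 rid0)))"
       "stag \<sigma>' s0 = max (stag \<sigma> s0) t'" by blast
      show ?thesis
      proof (cases "s = s0 \<and> rid = rid0")
        case True
        then have I: "srelays \<sigma>' s rid = insert s' (srelays \<sigma> s rid)" using h(2) by simp
        show ?thesis
        proof (cases "s' \<in> Q")
          case True
          then have "t \<le> t'" using p4[OF h(1)] m(2) \<open>s = s0 \<and> rid = rid0\<close> by blast
          then show ?thesis using h(3) \<open>s = s0 \<and> rid = rid0\<close> by (simp add: le_max_iff_disj)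
        next
          case False
          then have "srelays \<sigma> s rid \<inter> Q \<noteq> {}" using m(1) I by auto
          then show ?thesis using p5 m(2) sm order_trans by blast
        qed
      next
        case False
        then have "srelays \<sigma>' s rid = srelays \<sigma> s rid" using h(2) by auto
        then show ?thesis using p5 m sm order_trans by metis
      qed
    qed
  qed
  have q6: "t \<le> t'" if m: "(src,d,ReadAck t' v rid s) \<in># net \<sigma>'" "rop0 (fst rid) < snd rid" for src d t' v rid s
  proof -
    from net_RAck[OF st fin m(1)] show ?thesis
    proof
      assume "(src,d,ReadAck t' v rid s) \<in># net \<sigma>" then show ?thesis using p6 m(2) by blast
    next
      assume "\<exists>src' t'' v' s'. l = Dlv (src', s, ReadRelay t'' v' rid s') None \<and> (src', s, ReadRelay t'' v' rid s') \<in># net \<sigma>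
       \<and> src = s \<and> d = fst rid \<and> s \<in> S \<and> t' = stag \<sigma>' s \<and> v = sval \<sigma>' s \<and> quorum S \<le> card (srelays \<sigma>' s rid)
       \<and> srelays \<sigma>' s rid = insert s' (srelays \<sigma> s rid) \<and> stag \<sigma>' s = max (stag \<sigma> s) t''"
      then have tt: "t' = stag \<sigma>' s" and qr: "quorum S \<le> card (srelays \<sigma>' s rid)" by blast+
      have "srelays \<sigma>' s rid \<subseteq> S" using b' unfolding binv_def B8_def by blast
      then have "srelays \<sigma>' s rid \<inter> Q \<noteq> {}" using quorum_inter[OF fin _ QS qr Qq] by blast
      then show ?thesis using q5 m(2) tt by blast
    qed
  qed
  have q7: "t \<le> t'" if m: "rph \<sigma>' r = RWait A" "rop0 r < rop \<sigma>' r" "A s = Some (t',v)" for r A s t' v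
  proof -
    from rfr[OF st] consider (u) "rph \<sigma>' = rph \<sigma> \<and> rop \<sigma>' = rop \<sigma>" | (i) "\<exists>r. l = Inv r ORead" |
      (a) "\<exists>src r t v rid s ro. l = Dlv (src,r,ReadAck t v rid s) ro" by blast
    then show ?thesis
    proof cases
      case u then show ?thesis using p7 m by auto
    next
      case i show ?thesis using st i m p7 by (cases rule: step.cases) (auto split: if_splits)
    next
      case a
      from st show ?thesis
      proof (cases rule: step.cases)
        case (rd_ack_wait src r1 t1 v1 rid1 s1 A1 A')
        show ?thesis
        proof (cases "r = r1")
          case True
          then have A: "A = A1(s1 \<mapsto> (t1,v1))" "rop \<sigma>' r = rop \<sigma> r" using rd_ack_wait m by auto
          show ?thesis
          proof (cases "s = s1")
            case True
            then have "t' = t1" using A m by simp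
            then show ?thesis using p6[of src r1 t1 v1 rid1 s1] rd_ack_wait m A \<open>r = r1\<close> by auto
          next
            case False
            then have "A1 s = Some (t',v)" using A m by simp
            then show ?thesis using p7[of r1 A1 s t' v] rd_ack_wait m A \<open>r = r1\<close> by auto
          qed
        next
          case False then show ?thesis using rd_ack_wait m p7 by auto
        qed
      qed (use a m p7 in \<open>auto split: if_splits\<close>)
    qed
  qed
  show ?thesis unfolding PI_def
    using q0 q1 q2 q3 q4 q5 q6 q7 by blast
qed



fun rt :: "('p::linorder,'v) label \<Rightarrow> ('p,'v) rphase \<Rightarrow> 'p tag" where
  "rt (Dlv (src, r, ReadAck t0 v rid s) ro) (RWait A) = Min (fst ` ran (A(s \<mapsto> (t0,v))))"
| "rt _ _ = undefined"

context ohm begin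

lemma PI_trace:
  assumes QS: "Q \<subseteq> S" and Qq: "quorum S \<le> card Q" and tj: "\<forall>s\<in>Q. t \<le> stag (\<sigma>s j) s" and ij: "j \<le> i"
  shows "PI Q t (wop (\<sigma>s j)) (rop (\<sigma>s j)) (Gh i) (\<sigma>s i)"
  using ij
proof (induction i)
  case 0 then have "j = 0" by simp
  then show ?case using PI_base[OF binv] ginv[of 0] tj by (simp add: ginv_def)
next
  case (Suc i)
  show ?case
  proof (cases "j \<le> i")
    case True
    then have "PI Q t (wop (\<sigma>s j)) (rop (\<sigma>s j)) (Gh i) (\<sigma>s i)" by (rule Suc.IH)
    then show ?thesis using PI_step[OF st finS QS Qq binv] ginv[of i] by (simp add: ginv_def)
  next
    case False then have "j = Suc i" using Suc.prems by simp
    then show ?thesis using PI_base[OF binv] ginv[of "Suc i"] tj by (simp add: ginv_def del: Gh.simps)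
  qed
qed

lemma write_phase:
  assumes inv: "ls b = Inv w (OWrite x)" and bc: "b < c"
    and nr: "\<forall>j r. b < j \<longrightarrow> j < c \<longrightarrow> \<not> resp_by ls j w r"
  shows "(\<exists>A. wph (\<sigma>s c) w = WDisc x A \<and> wop (\<sigma>s c) w = wop (\<sigma>s (Suc b)) w) \<or>
         (\<exists>A. wph (\<sigma>s c) w = WWrite A \<and> wop (\<sigma>s c) w = Suc (wop (\<sigma>s (Suc b)) w))"
  using bc nr
proof (induction c)
  case 0 then show ?case by simp
next
  case (Suc c)
  show ?case
  proof (cases "b < c")
    case False
    then have "c = b" using Suc.prems by simp
    then show ?thesis using inv_step[OF st inv] by auto
  next
    case True
    have IH: "(\<exists>A. wph (\<sigma>s c) w = WDisc x A \<and> wop (\<sigma>s c) w = wop (\<sigma>s (Suc b)) w) \<or>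
         (\<exists>A. wph (\<sigma>s c) w = WWrite A \<and> wop (\<sigma>s c) w = Suc (wop (\<sigma>s (Suc b)) w))"
      using Suc.IH True Suc.prems by auto
    have nrc: "\<not> resp_by ls c w WResp" using Suc.prems True by auto
    from IH show ?thesis
    proof
      assume "\<exists>A. wph (\<sigma>s c) w = WDisc x A \<and> wop (\<sigma>s c) w = wop (\<sigma>s (Suc b)) w"
      then obtain A where "wph (\<sigma>s c) w = WDisc x A" "wop (\<sigma>s c) w = wop (\<sigma>s (Suc b)) w" by blast
      then show ?thesis using wdisc_next[OF st, of c w x A] by auto
    next
      assume "\<exists>A. wph (\<sigma>s c) w = WWrite A \<and> wop (\<sigma>s c) w = Suc (wop (\<sigma>s (Suc b)) w)"
      then obtain A where "wph (\<sigma>s c) w = WWrite A" "wop (\<sigma>s c) w = Suc (wop (\<sigma>s (Suc b)) w)" by blast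
      then show ?thesis using wwrite_next[OF st, of c w A] nrc unfolding resp_by_def by auto
    qed
  qed
qed

lemma read_phase:
  assumes inv: "ls b = Inv r ORead" and bc: "b < c"
    and nr: "\<forall>j rr. b < j \<longrightarrow> j < c \<longrightarrow> \<not> resp_by ls j r rr"
  shows "\<exists>A. rph (\<sigma>s c) r = RWait A \<and> rop (\<sigma>s c) r = rop (\<sigma>s (Suc b)) r"
  using bc nr
proof (induction c)
  case 0 then show ?case by simp
next
  case (Suc c)
  show ?case
  proof (cases "b < c")
    case False
    then have "c = b" using Suc.prems by simp
    then show ?thesis using inv_step[OF st inv] by auto
  next
    case True
    obtain A where A: "rph (\<sigma>s c) r = RWait A" "rop (\<sigma>s c) r = rop (\<sigma>s (Suc b)) r"
      using Suc.IH True Suc.prems by auto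
    have nrc: "\<And>u. \<not> resp_by ls c r (RResp u)" using Suc.prems True by auto
    then show ?thesis using rwait_next[OF st A(1)] A(2) unfolding resp_by_def by auto
  qed
qed


lemma op_cases: "is_op ls i \<Longrightarrow> (\<exists>w x. ls i = Inv w (OWrite x) \<and> w \<in> W) \<or> (\<exists>r. ls i = Inv r ORead \<and> r \<in> R)"
  unfolding is_op_def using inv_step[OF st] by (metis opkind.exhaust)

lemma write_inv: "is_write ls a \<Longrightarrow> \<exists>x. ls a = Inv (op_proc ls a) (OWrite x) \<and> op_proc ls a \<in> W \<and> write_val ls a = x"
  unfolding is_write_def op_proc_def write_val_def using inv_step[OF st] by fastforce

lemma read_inv: "is_read ls a \<Longrightarrow> ls a = Inv (op_proc ls a) ORead \<and> op_proc ls a \<in> R"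
  unfolding is_read_def op_proc_def using inv_step[OF st] by fastforce

lemma write_not_read: "is_write ls a \<Longrightarrow> \<not> is_read ls a"
  unfolding is_write_def is_read_def by auto

lemma is_op_wr: "is_op ls a \<longleftrightarrow> is_write ls a \<or> is_read ls a"
  unfolding is_op_def is_write_def is_read_def by (metis opkind.exhaust)

lemma completes_unique: "completes ls a j r \<Longrightarrow> completes ls a j' r' \<Longrightarrow> j = j' \<and> r = r'"
  unfolding completes_def resp_by_def by (metis label.inject(2) linorder_neqE_nat option.inject prod.inject)

definition ctime :: "nat \<Rightarrow> nat" where "ctime a = (SOME c. \<exists>rr. completes ls a c rr)"

lemma ctime: "completes ls a c rr \<Longrightarrow> ctime a = c"
  unfolding ctime_def by (rule some_equality) (auto dest: completes_unique)

definition wk :: "nat \<Rightarrow> nat" where "wk a = Suc (wop (\<sigma>s (Suc a)) (op_proc ls a))"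

definition tau :: "nat \<Rightarrow> 'p tag" where
  "tau a = (if is_write ls a then fst (Gfin (op_proc ls a) (wk a)) else rt (ls (ctime a)) (rph (\<sigma>s (ctime a)) (op_proc ls a)))"

lemma wcomp:
  assumes inv: "ls a = Inv w (OWrite x)" and cp: "completes ls a c rr"
  shows "\<exists>Q tg vv. Gh c w (Suc (wop (\<sigma>s (Suc a)) w)) = Some (tg,vv) \<and> Q \<subseteq> S \<and> quorum S \<le> card Q
     \<and> (\<forall>s\<in>Q. tg \<le> stag (\<sigma>s c) s) \<and> rr = WResp"
proof -
  have pw: "op_proc ls a = w" using inv by (simp add: op_proc_def)
  have ac: "a < c" and rb: "resp_by ls c w rr" and nr: "\<forall>j r. a < j \<longrightarrow> j < c \<longrightarrow> \<not> resp_by ls j w r"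
    using cp pw unfolding completes_def by auto
  have wW: "w \<in> W" using inv_step[OF st inv] by auto
  then have wR: "w \<notin> R" using disj by auto
  obtain src m where l: "ls c = Dlv (src, w, m) (Some rr)" using rb unfolding resp_by_def by blast
  obtain t v k s A where h: "m = WriteAck t v k s" "rr = WResp" "wph (\<sigma>s c) w = WWrite A" "k = wop (\<sigma>s c) w"
     "quorum S \<le> card (insert s A)" "(src,w,m) \<in># net (\<sigma>s c)"
    using resp_write[OF st l wR] by blast
  have ph: "wop (\<sigma>s c) w = Suc (wop (\<sigma>s (Suc a)) w)"
    using write_phase[OF inv ac nr] h(3) by auto
  have G: "ginv (Gh c) (\<sigma>s c)" and B: "binv S (\<sigma>s c)" by (rule ginv, rule binv)
  obtain tg vv where g7: "Gh c w (wop (\<sigma>s c) w) = Some (tg,vv)" "\<forall>s\<in>A. tg \<le> stag (\<sigma>s c) s"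
    using G h(3) unfolding ginv_def G7_def by blast
  obtain tg' vv' where g5: "Gh c w k = Some (tg',vv')" "tg' \<le> stag (\<sigma>s c) s"
    using G h(1,4,6) unfolding ginv_def G5_def by blast
  have "tg' = tg" using g5 g7 h(4) by simp
  moreover have "insert s A \<subseteq> S" using B h unfolding binv_def B10_def B4_def by blast
  ultimately show ?thesis using g7 g5 h ph by (intro exI[of _ "insert s A"]) auto
qed

lemma Min_ge:
  assumes "finite X" "X \<noteq> {}" "\<forall>x\<in>X. (t::'a::linorder) \<le> x" shows "t \<le> Min X"
  using assms by simp

lemma rcomp:
  assumes inv: "ls a = Inv r ORead" and cp: "completes ls a c rr"
  shows "\<exists>src t0 v s A u. ls c = Dlv (src, r, ReadAck t0 v (r, rop (\<sigma>s c) r) s) (Some (RResp u)) \<and> rr = RResp u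
     \<and> rph (\<sigma>s c) r = RWait A \<and> rop (\<sigma>s c) r = rop (\<sigma>s (Suc a)) r
     \<and> quorum S \<le> card (dom (A(s \<mapsto> (t0,v)))) \<and> dom (A(s \<mapsto> (t0,v))) \<subseteq> S
     \<and> (Min (fst ` ran (A(s \<mapsto> (t0,v)))), u) \<in> ran (A(s \<mapsto> (t0,v)))
     \<and> (src, r, ReadAck t0 v (r, rop (\<sigma>s c) r) s) \<in># net (\<sigma>s c)
     \<and> (\<forall>s' t' v'. (A(s \<mapsto> (t0,v))) s' = Some (t',v') \<longrightarrow> good (Gh c) t' v' \<and> t' \<le> stag (\<sigma>s c) s')"
proof -
  have pr: "op_proc ls a = r" using inv by (simp add: op_proc_def)
  have ac: "a < c" and rb: "resp_by ls c r rr" and nr: "\<forall>j rr. a < j \<longrightarrow> j < c \<longrightarrow> \<not> resp_by ls j r rr"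
    using cp pr unfolding completes_def by auto
  have rR: "r \<in> R" using inv_step[OF st inv] by auto
  then have rW: "r \<notin> W" using disj by auto
  obtain src m where l: "ls c = Dlv (src, r, m) (Some rr)" using rb unfolding resp_by_def by blast
  obtain t0 v rid s A u where h: "m = ReadAck t0 v rid s" "rr = RResp u" "rph (\<sigma>s c) r = RWait A"
     "rid = (r, rop (\<sigma>s c) r)" "quorum S \<le> card (dom (A(s \<mapsto> (t0,v))))" "(src,r,m) \<in># net (\<sigma>s c)"
     "(Min (fst ` ran (A(s \<mapsto> (t0,v)))), u) \<in> ran (A(s \<mapsto> (t0,v)))"
    using resp_read[OF st l rW] by blast
  have ph: "rop (\<sigma>s c) r = rop (\<sigma>s (Suc a)) r"
    using read_phase[OF inv ac nr] h(3) by auto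
  have G: "ginv (Gh c) (\<sigma>s c)" and B: "binv S (\<sigma>s c)" by (rule ginv, rule binv)
  have g10: "\<forall>s' t' v'. A s' = Some (t',v') \<longrightarrow> good (Gh c) t' v' \<and> t' \<le> stag (\<sigma>s c) s'"
    using G h(3) unfolding ginv_def G10_def by blast
  have g9: "good (Gh c) t0 v \<and> t0 \<le> stag (\<sigma>s c) s"
    using G h(1,6) unfolding ginv_def G9_def by blast
  have dS: "dom (A(s \<mapsto> (t0,v))) \<subseteq> S" using B h(1,3,6) unfolding binv_def B11_def B7_def by auto
  show ?thesis using h ph g10 g9 dS l by (intro exI[of _ src] exI[of _ t0] exI[of _ v] exI[of _ s] exI[of _ A] exI[of _ u]) auto
qed


lemma tau_w:
  assumes inv: "ls a = Inv w (OWrite x)" and cp: "completes ls a c rr"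
  shows "\<exists>Q vv. Gh c w (wk a) = Some (tau a, vv) \<and> Q \<subseteq> S \<and> quorum S \<le> card Q \<and> (\<forall>s\<in>Q. tau a \<le> stag (\<sigma>s c) s)"
proof -
  obtain Q tg vv where h: "Gh c w (Suc (wop (\<sigma>s (Suc a)) w)) = Some (tg,vv)" "Q \<subseteq> S" "quorum S \<le> card Q"
     "\<forall>s\<in>Q. tg \<le> stag (\<sigma>s c) s" using wcomp[OF inv cp] by blast
  have pw: "op_proc ls a = w" "is_write ls a" using inv by (auto simp: op_proc_def is_write_def)
  then have wk: "wk a = Suc (wop (\<sigma>s (Suc a)) w)" by (simp add: wk_def)
  have "tau a = tg" using Gfin[OF h(1)] pw wk by (simp add: tau_def)
  then show ?thesis using h wk by auto
qed

lemma tau_r: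
  assumes inv: "ls a = Inv r ORead" and cp: "completes ls a c rr"
  shows "\<exists>Q u. rr = RResp u \<and> Q \<subseteq> S \<and> quorum S \<le> card Q \<and> (\<forall>s\<in>Q. tau a \<le> stag (\<sigma>s c) s) \<and> good (Gh c) (tau a) u"
proof -
  obtain src t0 v s A u where h: "ls c = Dlv (src, r, ReadAck t0 v (r, rop (\<sigma>s c) r) s) (Some (RResp u))" "rr = RResp u"
     "rph (\<sigma>s c) r = RWait A" "quorum S \<le> card (dom (A(s \<mapsto> (t0,v))))" "dom (A(s \<mapsto> (t0,v))) \<subseteq> S"
     "(Min (fst ` ran (A(s \<mapsto> (t0,v)))), u) \<in> ran (A(s \<mapsto> (t0,v)))"
     "\<forall>s' t' v'. (A(s \<mapsto> (t0,v))) s' = Some (t',v') \<longrightarrow> good (Gh c) t' v' \<and> t' \<le> stag (\<sigma>s c) s'"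
    using rcomp[OF inv cp] by blast
  have pr: "op_proc ls a = r" "\<not> is_write ls a" using inv by (auto simp: op_proc_def is_write_def)
  have ta: "tau a = Min (fst ` ran (A(s \<mapsto> (t0,v))))"
    using ctime[OF cp] pr h(1,3) by (simp add: tau_def)
  have fin: "finite (ran (A(s \<mapsto> (t0,v))))" using h(5) finS finite_subset finite_ran by blast
  have Q: "\<forall>s'\<in>dom (A(s \<mapsto> (t0,v))). tau a \<le> stag (\<sigma>s c) s'"
  proof
    fix s' assume "s' \<in> dom (A(s \<mapsto> (t0,v)))"
    then obtain p where e0: "(A(s \<mapsto> (t0,v))) s' = Some p" by blast
    obtain t' v' where "p = (t', v')" by (cases p)
    then have e: "(A(s \<mapsto> (t0,v))) s' = Some (t',v')" using e0 by simp
    have "tau a \<le> t'" unfolding ta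
      using ranI[of "A(s \<mapsto> (t0,v))" s' "(t',v')", OF e] fin by (intro Min_le) force+
    then show "tau a \<le> stag (\<sigma>s c) s'" using h(7) e order_trans by blast
  qed
  obtain s1 where "(A(s \<mapsto> (t0,v))) s1 = Some (tau a, u)" using h(6) ta unfolding ran_def by auto
  then have "good (Gh c) (tau a) u" using h(7) by blast
  then show ?thesis using h(2,4,5) Q by blast
qed

lemma op_quorum:
  assumes "is_op ls a" "completes ls a c rr"
  shows "\<exists>Q. Q \<subseteq> S \<and> quorum S \<le> card Q \<and> (\<forall>s\<in>Q. tau a \<le> stag (\<sigma>s c) s)"
  using op_cases[OF assms(1)] tau_w[OF _ assms(2)] tau_r[OF _ assms(2)] by metis

lemma PI_D3: "PI Q t w0 r0 Gm \<sigma> \<Longrightarrow> Gm w k = Some (tg,vv) \<Longrightarrow> Suc (w0 w) < k \<Longrightarrow> t < tg"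
  unfolding PI_def by (drule conjunct2, drule conjunct2, drule conjunct2, drule conjunct1) blast
lemma PI_D6: "PI Q t w0 r0 Gm \<sigma> \<Longrightarrow> (src,d,ReadAck t' v rid s) \<in># net \<sigma> \<Longrightarrow> r0 (fst rid) < snd rid \<Longrightarrow> t \<le> t'"
  unfolding PI_def by (drule conjunct2, drule conjunct2, drule conjunct2, drule conjunct2,
      drule conjunct2, drule conjunct2, drule conjunct1) blast
lemma PI_D7: "PI Q t w0 r0 Gm \<sigma> \<Longrightarrow> rph \<sigma> r = RWait A \<Longrightarrow> r0 r < rop \<sigma> r \<Longrightarrow> A s = Some (t',v) \<Longrightarrow> t \<le> t'"
  unfolding PI_def by (drule conjunct2, drule conjunct2, drule conjunct2, drule conjunct2,
      drule conjunct2, drule conjunct2, drule conjunct2) blast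

lemma after:
  assumes allc: "\<forall>i. is_op ls i \<longrightarrow> (\<exists>j r. completes ls i j r)"
    and opa: "is_op ls a" and cpa: "completes ls a c rr" and opb: "is_op ls b" and cb: "c < b"
  shows "(is_write ls b \<longrightarrow> tau a < tau b) \<and> (is_read ls b \<longrightarrow> tau a \<le> tau b)"
proof -
  obtain Q where Q: "Q \<subseteq> S" "quorum S \<le> card Q" "\<forall>s\<in>Q. tau a \<le> stag (\<sigma>s c) s"
    using op_quorum[OF opa cpa] by blast
  obtain cb' rb where cpb: "completes ls b cb' rb" using allc opb by blast
  have bcb: "b < cb'" using cpb unfolding completes_def by simp
  have PIc: "PI Q (tau a) (wop (\<sigma>s c)) (rop (\<sigma>s c)) (Gh cb') (\<sigma>s cb')"
    using PI_trace[OF Q(1,2,3)] cb bcb by simp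
  show ?thesis
  proof (intro conjI impI)
    assume wb: "is_write ls b"
    obtain x where invb: "ls b = Inv (op_proc ls b) (OWrite x)" using write_inv[OF wb] by blast
    let ?w = "op_proc ls b"
    obtain vv where g: "Gh cb' ?w (wk b) = Some (tau b, vv)" using tau_w[OF invb cpb] by blast
    have "wop (\<sigma>s (Suc b)) ?w = Suc (wop (\<sigma>s b) ?w)" using inv_step[OF st invb] by auto
    moreover have "wop (\<sigma>s c) ?w \<le> wop (\<sigma>s b) ?w" using wop_le cb by simp
    ultimately have "Suc (wop (\<sigma>s c) ?w) < wk b" unfolding wk_def by simp
    then show "tau a < tau b" using PI_D3[OF PIc g] by blast
  next
    assume rb': "is_read ls b"
    let ?r = "op_proc ls b"
    have invb: "ls b = Inv ?r ORead" using read_inv[OF rb'] by blast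
    obtain src t0 v s A u where h: "ls cb' = Dlv (src, ?r, ReadAck t0 v (?r, rop (\<sigma>s cb') ?r) s) (Some (RResp u))"
     "rph (\<sigma>s cb') ?r = RWait A" "rop (\<sigma>s cb') ?r = rop (\<sigma>s (Suc b)) ?r" "dom (A(s \<mapsto> (t0,v))) \<subseteq> S"
     "(src, ?r, ReadAck t0 v (?r, rop (\<sigma>s cb') ?r) s) \<in># net (\<sigma>s cb')"
      using rcomp[OF invb cpb] by blast
    have "rop (\<sigma>s (Suc b)) ?r = Suc (rop (\<sigma>s b) ?r)" using inv_step[OF st invb] by auto
    moreover have "rop (\<sigma>s c) ?r \<le> rop (\<sigma>s b) ?r" using rop_le cb by simp
    ultimately have lt: "rop (\<sigma>s c) ?r < rop (\<sigma>s cb') ?r" using h(3) by simp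
    have p6: "tau a \<le> t0" using PI_D6[OF PIc h(5)] lt by simp
    have p7: "tau a \<le> t'" if "A s' = Some (t',v')" for s' t' v'
      using PI_D7[OF PIc h(2) lt that] .
    have tb: "tau b = Min (fst ` ran (A(s \<mapsto> (t0,v))))"
      using ctime[OF cpb] h(1,2) write_not_read[of b] rb' by (auto simp: tau_def)
    have fin: "finite (ran (A(s \<mapsto> (t0,v))))" using h(4) finS finite_subset finite_ran by blast
    have "\<forall>x\<in>fst ` ran (A(s \<mapsto> (t0,v))). tau a \<le> x"
    proof
      fix x assume "x \<in> fst ` ran (A(s \<mapsto> (t0,v)))"
      then obtain s' v' where "(A(s \<mapsto> (t0,v))) s' = Some (x,v')" unfolding ran_def by auto
      then show "tau a \<le> x" using p6 p7 by (cases "s' = s") auto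
    qed
    moreover have "fst ` ran (A(s \<mapsto> (t0,v))) \<noteq> {}" by (auto simp: ran_def)
    ultimately show "tau a \<le> tau b" unfolding tb using fin by simp
  qed
qed


lemma write_tag:
  assumes wa: "is_write ls a" and cp: "completes ls a c rr"
  shows "snd (tau a) = op_proc ls a \<and> 0 < fst (tau a)"
proof -
  obtain x where inv: "ls a = Inv (op_proc ls a) (OWrite x)" using write_inv[OF wa] by blast
  obtain vv where g: "Gh c (op_proc ls a) (wk a) = Some (tau a, vv)" using tau_w[OF inv cp] by blast
  then show ?thesis using ginv[of c] unfolding ginv_def G2_def by blast
qed

lemma before_next_inv:
  assumes wa: "ls a = Inv w (OWrite x)" and wb: "ls b = Inv w (OWrite y)" and ab: "a < b"
    and cp: "completes ls a c rr"
  shows "c < b"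
proof (rule ccontr)
  assume "\<not> c < b"
  then have nr: "\<forall>j r. a < j \<longrightarrow> j < b \<longrightarrow> \<not> resp_by ls j w r"
    using cp wa unfolding completes_def by (auto simp: op_proc_def)
  have "wph (\<sigma>s b) w \<noteq> WIdle" using write_phase[OF wa ab nr] by auto
  moreover have "wph (\<sigma>s b) w = WIdle" using inv_step[OF st wb] by auto
  ultimately show False by simp
qed

lemma tau_inj:
  assumes allc: "\<forall>i. is_op ls i \<longrightarrow> (\<exists>j r. completes ls i j r)"
    and wa: "is_write ls a" and wb: "is_write ls b" and ab: "a \<noteq> b"
  shows "tau a \<noteq> tau b"
proof
  assume eq: "tau a = tau b"
  have opa: "is_op ls a" and opb: "is_op ls b" using wa wb is_op_wr by auto
  obtain ca ra where cpa: "completes ls a ca ra" using allc opa by blast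
  obtain cb rb where cpb: "completes ls b cb rb" using allc opb by blast
  have "op_proc ls a = op_proc ls b" using write_tag[OF wa cpa] write_tag[OF wb cpb] eq by simp
  obtain x y where ia: "ls a = Inv (op_proc ls a) (OWrite x)" and ib: "ls b = Inv (op_proc ls b) (OWrite y)"
    using write_inv[OF wa] write_inv[OF wb] by blast
  show False
  proof (cases "a < b")
    case True
    have "ca < b" using before_next_inv[OF ia _ True cpa] ib \<open>op_proc ls a = op_proc ls b\<close> by simp
    then have "tau a < tau b" using after[OF allc opa cpa opb] wb by blast
    then show False using eq by simp
  next
    case False
    then have ba: "b < a" using ab by simp
    have "cb < a" using before_next_inv[OF ib _ ba cpb] ia \<open>op_proc ls a = op_proc ls b\<close> by simp
    then have "tau b < tau a" using after[OF allc opb cpb opa] wa by blast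
    then show False using eq by simp
  qed
qed

lemma read_value:
  assumes ra: "is_read ls a" and cp: "completes ls a c (RResp u)"
  shows "(fst (tau a) = 0 \<and> u = None) \<or> (\<exists>b. is_write ls b \<and> tau b = tau a \<and> u = Some (write_val ls b))"
proof -
  have inv: "ls a = Inv (op_proc ls a) ORead" using read_inv[OF ra] by blast
  obtain u' where h: "RResp u = RResp u'" "good (Gh c) (tau a) u'" using tau_r[OF inv cp] by blast
  then have g: "good (Gh c) (tau a) u" by simp
  show ?thesis
  proof (cases "fst (tau a) = 0 \<and> u = None")
    case False
    then obtain k where k: "Gh c (snd (tau a)) k = Some (tau a, u)" using g unfolding good_def by blast
    obtain x b where b: "b < c" "u = Some x" "ls b = Inv (snd (tau a)) (OWrite x)" "Suc (wop (\<sigma>s (Suc b)) (snd (tau a))) = k"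
      using Gh_trace[OF k] by blast
    have wb: "is_write ls b" and pb: "op_proc ls b = snd (tau a)" and vb: "write_val ls b = x"
      using b(3) by (auto simp: is_write_def op_proc_def write_val_def)
    have "wk b = k" using b(4) pb by (simp add: wk_def)
    then have "tau b = tau a" using Gfin[OF k] wb pb by (simp add: tau_def)
    then show ?thesis using wb vb b(2) by blast
  qed blast
qed

definition prec :: "nat \<Rightarrow> nat \<Rightarrow> bool" where
  "prec a b \<longleftrightarrow> is_op ls a \<and> is_op ls b \<and> (tau a < tau b \<or> (is_write ls a \<and> is_read ls b \<and> tau a = tau b))"

theorem atomic:
  assumes allc: "\<forall>i. is_op ls i \<longrightarrow> (\<exists>j r. completes ls i j r)"
  shows "(\<forall>a b. prec a b \<longrightarrow> is_op ls a \<and> is_op ls b)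
        \<and> (\<forall>a. \<not> prec a a)
        \<and> (\<forall>a b c. prec a b \<and> prec b c \<longrightarrow> prec a c)
        \<and> (\<forall>a b j r. completes ls a j r \<and> is_op ls b \<and> j < b \<longrightarrow> \<not> prec b a)
        \<and> (\<forall>a b. is_write ls a \<and> is_write ls b \<and> a \<noteq> b \<longrightarrow> prec a b \<or> prec b a)
        \<and> (\<forall>a b. is_read ls a \<and> is_write ls b \<longrightarrow> prec a b \<or> prec b a)
        \<and> (\<forall>a j u. is_read ls a \<and> completes ls a j (RResp u) \<longrightarrow>
             (\<exists>b. is_write ls b \<and> prec b a
                  \<and> (\<forall>c. is_write ls c \<and> prec c a \<longrightarrow> c = b \<or> prec c b)
                  \<and> u = Some (write_val ls b))
           \<or> ((\<forall>b. is_write ls b \<longrightarrow> \<not> prec b a) \<and> u = None))"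
proof (intro conjI allI impI)
  fix a b assume "prec a b" then show "is_op ls a" "is_op ls b" by (auto simp: prec_def)
next
  fix a show "\<not> prec a a" using write_not_read by (auto simp: prec_def)
next
  fix a b c assume "prec a b \<and> prec b c"
  then show "prec a c" using write_not_read unfolding prec_def by (auto dest: order.strict_trans order.strict_trans1 order.strict_trans2)
next
  fix a b j r assume h: "completes ls a j r \<and> is_op ls b \<and> j < b"
  then have opa: "is_op ls a" by (simp add: completes_def)
  have "(is_write ls b \<longrightarrow> tau a < tau b) \<and> (is_read ls b \<longrightarrow> tau a \<le> tau b)"
    using after[OF allc opa] h by blast
  then show "\<not> prec b a" using h write_not_read is_op_wr unfolding prec_def by fastforce
next
  fix a b assume h: "is_write ls a \<and> is_write ls b \<and> a \<noteq> b"
  then have "tau a \<noteq> tau b" using tau_inj[OF allc] by blast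
  then show "prec a b \<or> prec b a" using h is_op_wr unfolding prec_def by (auto simp: neq_iff)
next
  fix a b assume h: "is_read ls a \<and> is_write ls b"
  then show "prec a b \<or> prec b a" using is_op_wr unfolding prec_def by (auto simp: neq_iff)
next
  fix a j u assume h: "is_read ls a \<and> completes ls a j (RResp u)"
  have wpos: "0 < fst (tau b)" if "is_write ls b" for b
  proof -
    have "is_op ls b" using that is_op_wr by blast
    then obtain cb rb where "completes ls b cb rb" using allc by blast
    then show ?thesis using write_tag[OF that] by blast
  qed
  have rv: "(fst (tau a) = 0 \<and> u = None) \<or> (\<exists>b. is_write ls b \<and> tau b = tau a \<and> u = Some (write_val ls b))"
    using read_value h by blast
  from rv show "(\<exists>b. is_write ls b \<and> prec b a
                  \<and> (\<forall>c. is_write ls c \<and> prec c a \<longrightarrow> c = b \<or> prec c b)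
                  \<and> u = Some (write_val ls b))
           \<or> ((\<forall>b. is_write ls b \<longrightarrow> \<not> prec b a) \<and> u = None)"
  proof
    assume z: "fst (tau a) = 0 \<and> u = None"
    have "\<not> prec b a" if "is_write ls b" for b
    proof
      assume "prec b a"
      then have "tau b \<le> tau a" unfolding prec_def by auto
      then have "fst (tau b) \<le> fst (tau a)" by (rule prod_le_fst)
      then show False using wpos[OF that] z by simp
    qed
    then show ?thesis using z by blast
  next
    assume "\<exists>b. is_write ls b \<and> tau b = tau a \<and> u = Some (write_val ls b)"
    then obtain b where b: "is_write ls b" "tau b = tau a" "u = Some (write_val ls b)" by blast
    have pba: "prec b a" using b h is_op_wr unfolding prec_def by auto
    have "c = b \<or> prec c b" if c: "is_write ls c" "prec c a" for c
    proof (cases "c = b")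
      case False
      then have "tau c \<noteq> tau b" using tau_inj[OF allc c(1) b(1)] by blast
      moreover have "tau c \<le> tau a" using c(2) unfolding prec_def by auto
      ultimately have "tau c < tau b" using b(2) by simp
      then show ?thesis using c b is_op_wr unfolding prec_def by auto
    qed simp
    then show ?thesis using b pba by blast
  qed
qed

end


lemma mem_diff_neq: "x \<noteq> y \<Longrightarrow> x \<in># M - {#y#} \<longleftrightarrow> x \<in># M"
  by (auto simp: in_diff_count)

lemma qc:
  fixes D :: "nat \<Rightarrow> 'a set" and c0 :: nat
  assumes mono: "\<And>c c'. c0 \<le> c \<Longrightarrow> c \<le> c' \<Longrightarrow> D c \<subseteq> D c'"
    and fin: "\<And>c. finite (D c)" and C: "finite C" "q \<le> card C" and q0: "0 < q"
    and h: "\<And>s. s \<in> C \<Longrightarrow> \<exists>j. c0 \<le> j \<and> s \<in> D j \<and> card (D j) < q"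
  shows False
proof -
  define js where "js s = (SOME j. c0 \<le> j \<and> s \<in> D j \<and> card (D j) < q)" for s
  have js: "c0 \<le> js s \<and> s \<in> D (js s) \<and> card (D (js s)) < q" if "s \<in> C" for s
    using h[OF that] unfolding js_def by (rule someI_ex)
  have Cne: "C \<noteq> {}" using C(2) q0 by auto
  define M where "M = Max (js ` C)"
  have "M \<in> js ` C" unfolding M_def using C(1) Cne by (intro Max_in) auto
  then obtain s0 where s0: "s0 \<in> C" "js s0 = M" by blast
  have "C \<subseteq> D M"
  proof
    fix s assume sC: "s \<in> C"
    have "js s \<le> M" unfolding M_def using C(1) sC by (intro Max_ge) auto
    then show "s \<in> D M" using mono[of "js s" M] js[OF sC] by blast
  qed
  then have "card C \<le> card (D M)" using fin by (rule card_mono[rotated])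
  moreover have "card (D M) < q" using js[OF s0(1)] s0(2) by simp
  ultimately show False using C(2) by simp
qed


lemma srv_disc_resp: "step W R S \<sigma> (Dlv (src, s, Discover k w) r) \<sigma>' \<Longrightarrow> s \<in> S \<Longrightarrow>
   (s, w, DiscoverAck (stag \<sigma> s) (sval \<sigma> s) k s) \<in># net \<sigma>'"
  by (erule stepE) (auto simp: handled_def mem_diff_neq)

lemma srv_write_resp: "step W R S \<sigma> (Dlv (src, s, WriteRequest t v k w) r) \<sigma>' \<Longrightarrow> s \<in> S \<Longrightarrow>
   \<exists>t' v'. (s, w, WriteAck t' v' k s) \<in># net \<sigma>'"
  by (erule stepE) (auto simp: handled_def split: if_splits)

lemma srv_readreq_resp: "step W R S \<sigma> (Dlv (src, s, ReadRequest rid) r) \<sigma>' \<Longrightarrow> s \<in> S \<Longrightarrow> finite S \<Longrightarrow> s2 \<in> S \<Longrightarrow>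
   (s, s2, ReadRelay (stag \<sigma> s) (sval \<sigma> s) rid s) \<in># net \<sigma>'"
  by (erule stepE) (auto simp: handled_def mem_diff_neq)

lemma srv_relay_resp: "step W R S \<sigma> (Dlv (src, s2, ReadRelay t v rid s) r) \<sigma>' \<Longrightarrow> s2 \<in> S \<Longrightarrow>
   s \<in> srelays \<sigma>' s2 rid \<and> (quorum S \<le> card (srelays \<sigma>' s2 rid) \<longrightarrow> rid \<in> sacked \<sigma>' s2)"
  by (erule stepE) (auto simp: handled_def split: if_splits)

lemma srelays_mono: "step W R S \<sigma> l \<sigma>' \<Longrightarrow> srelays \<sigma> s rid \<subseteq> srelays \<sigma>' s rid"
  by (erule stepE; auto split: if_splits simp: mem_diff_neq)

lemma sacked_mono: "step W R S \<sigma> l \<sigma>' \<Longrightarrow> sacked \<sigma> s \<subseteq> sacked \<sigma>' s"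
  by (erule stepE; auto split: if_splits simp: mem_diff_neq)

lemma sacked_new: "step W R S \<sigma> l \<sigma>' \<Longrightarrow> rid \<in> sacked \<sigma>' s \<Longrightarrow> rid \<notin> sacked \<sigma> s \<Longrightarrow>
   \<exists>t v. (s, fst rid, ReadAck t v rid s) \<in># net \<sigma>'"
  by (erule stepE; auto split: if_splits simp: mem_diff_neq)

lemma dack_wait_at: "step W R S \<sigma> (Dlv (src, w, DiscoverAck t v k s) r) \<sigma>' \<Longrightarrow> w \<in> W \<Longrightarrow>
   wph \<sigma> w = WDisc x A \<Longrightarrow> k = wop \<sigma> w \<Longrightarrow> wph \<sigma>' w = WDisc x' A'' \<Longrightarrow>
   wph \<sigma>' w = WDisc x (A(s \<mapsto> t)) \<and> card (dom (A(s \<mapsto> t))) < quorum S"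
  by (erule stepE) (auto simp: handled_def mem_diff_neq)

lemma wack_wait_at: "step W R S \<sigma> (Dlv (src, w, WriteAck t v k s) None) \<sigma>' \<Longrightarrow> w \<in> W \<Longrightarrow>
   wph \<sigma> w = WWrite A \<Longrightarrow> k = wop \<sigma> w \<Longrightarrow>
   wph \<sigma>' w = WWrite (insert s A) \<and> card (insert s A) < quorum S"
  by (erule stepE) (auto simp: handled_def mem_diff_neq)

lemma rack_wait_at: "step W R S \<sigma> (Dlv (src, r, ReadAck t v rid s) None) \<sigma>' \<Longrightarrow> r \<in> R \<Longrightarrow>
   rph \<sigma> r = RWait A \<Longrightarrow> rid = (r, rop \<sigma> r) \<Longrightarrow>
   rph \<sigma>' r = RWait (A(s \<mapsto> (t,v))) \<and> card (dom (A(s \<mapsto> (t,v)))) < quorum S"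
  by (erule stepE) (auto simp: handled_def mem_diff_neq)

lemma wdisc_grow: "step W R S \<sigma> l \<sigma>' \<Longrightarrow> wph \<sigma> w = WDisc x A \<Longrightarrow> wph \<sigma>' w = WDisc x' A' \<Longrightarrow> dom A \<subseteq> dom A'"
  by (erule stepE; auto split: if_splits simp: mem_diff_neq)

lemma wwrite_grow: "step W R S \<sigma> l \<sigma>' \<Longrightarrow> wph \<sigma> w = WWrite A \<Longrightarrow> wph \<sigma>' w = WWrite A' \<Longrightarrow> A \<subseteq> A'"
  by (erule stepE; auto split: if_splits simp: mem_diff_neq)

lemma rwait_grow: "step W R S \<sigma> l \<sigma>' \<Longrightarrow> rph \<sigma> r = RWait A \<Longrightarrow> rph \<sigma>' r = RWait A' \<Longrightarrow> dom A \<subseteq> dom A'"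
  by (erule stepE; auto split: if_splits simp: mem_diff_neq)

lemma wdd_reqs: "step W R S \<sigma> l \<sigma>' \<Longrightarrow> wph \<sigma> w = WDisc x A \<Longrightarrow> wph \<sigma>' w = WWrite A' \<Longrightarrow> finite S \<Longrightarrow>
   \<exists>tg. \<forall>s\<in>S. (w, s, WriteRequest tg (Some x) (Suc (wop \<sigma> w)) w) \<in># net \<sigma>'"
  by (erule stepE; auto split: if_splits simp: mem_diff_neq)

locale ohm_fair = ohm +
  assumes fair: "fair \<sigma>s ls"
begin

lemma deliver: "(src,d,m) \<in># net (\<sigma>s i) \<Longrightarrow> correct \<sigma>s d \<Longrightarrow> \<exists>j\<ge>i. \<exists>r. ls j = Dlv (src,d,m) r"
  using fair unfolding fair_def by blast

lemma correct_quorum: "quorum S \<le> card {s\<in>S. correct \<sigma>s s}"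
proof -
  let ?C = "{s\<in>S. correct \<sigma>s s}"
  define ti where "ti s = (SOME i. s \<in> crashed (\<sigma>s i))" for s
  have ti: "s \<in> crashed (\<sigma>s (ti s))" if "s \<in> S - ?C" for s
    using that unfolding ti_def correct_def by (auto intro: someI_ex)
  define T where "T = Max (insert 0 (ti ` (S - ?C)))"
  have fin: "finite (S - ?C)" using finS by simp
  have "S - ?C \<subseteq> crashed (\<sigma>s T) \<inter> S"
  proof
    fix s assume s: "s \<in> S - ?C"
    have "ti s \<le> T" unfolding T_def using fin s by (intro Max_ge) auto
    then show "s \<in> crashed (\<sigma>s T) \<inter> S" using crashed_le ti[OF s] s by blast
  qed
  then have "card (S - ?C) \<le> card (crashed (\<sigma>s T) \<inter> S)" by (rule card_mono[rotated]) (simp add: finS)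
  also have "\<dots> \<le> f" using ex unfolding execution_def by blast
  finally have "card (S - ?C) \<le> f" .
  moreover have "card (S - ?C) = card S - card ?C" using finS by (intro card_Diff_subset) auto
  moreover have "card ?C \<le> card S" using finS by (intro card_mono) auto
  ultimately show ?thesis using fS unfolding quorum_def by linarith
qed


lemma sacked_trace: "rid \<in> sacked (\<sigma>s j) s \<Longrightarrow> \<exists>j'\<le>j. \<exists>t v. (s, fst rid, ReadAck t v rid s) \<in># net (\<sigma>s j')"
proof (induction j)
  case 0 then show ?case by (simp add: s0 init_state_def)
next
  case (Suc j)
  show ?case
  proof (cases "rid \<in> sacked (\<sigma>s j) s")
    case True then show ?thesis using Suc.IH le_SucI by blast
  next
    case False then show ?thesis using sacked_new[OF st Suc.prems] by blast
  qed
qed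

lemma completes_from_resp:
  assumes op: "is_op ls i" and r: "\<exists>j>i. \<exists>rr. resp_by ls j (op_proc ls i) rr"
  shows "\<exists>j rr. completes ls i j rr"
proof -
  let ?P = "\<lambda>j. i < j \<and> (\<exists>rr. resp_by ls j (op_proc ls i) rr)"
  have ex: "\<exists>j. ?P j" using r by blast
  define j0 where "j0 = (LEAST j. ?P j)"
  have P0: "?P j0" unfolding j0_def using LeastI_ex[OF ex] .
  have nl: "\<not> ?P k" if "k < j0" for k using not_less_Least[OF that[unfolded j0_def]] .
  obtain rr where "resp_by ls j0 (op_proc ls i) rr" using P0 by blast
  then have "completes ls i j0 rr" unfolding completes_def using op P0 nl by blast
  then show ?thesis by blast
qed

lemma mono_interval:
  fixes D :: "nat \<Rightarrow> 'a set"
  assumes "\<And>c. c0 \<le> c \<Longrightarrow> D c \<subseteq> D (Suc c)"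
  shows "c0 \<le> c \<Longrightarrow> c \<le> c' \<Longrightarrow> D c \<subseteq> D c'"
proof (induction c')
  case 0 then show ?case by simp
next
  case (Suc c')
  show ?case
  proof (cases "c \<le> c'")
    case True then show ?thesis using Suc assms[of c'] by (meson order_trans)
  next
    case False then have "c = Suc c'" using Suc.prems by simp
    then show ?thesis by simp
  qed
qed

lemma has_resp:
  assumes op: "is_op ls i" and cor: "correct \<sigma>s (op_proc ls i)"
  shows "\<exists>j>i. \<exists>rr. resp_by ls j (op_proc ls i) rr"
proof (rule ccontr)
  assume "\<not> ?thesis"
  then have nr: "\<forall>j rr. i < j \<longrightarrow> \<not> resp_by ls j (op_proc ls i) rr" by blast
  let ?C = "{s\<in>S. correct \<sigma>s s}"
  have Cq: "quorum S \<le> card ?C" by (rule correct_quorum)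
  have Cf: "finite ?C" using finS by simp
  have q0: "0 < quorum S" by (simp add: quorum_def)
  let ?p = "op_proc ls i"
  from op_cases[OF op] show False
  proof
    assume "\<exists>w x. ls i = Inv w (OWrite x) \<and> w \<in> W"
    then obtain w x where inv: "ls i = Inv w (OWrite x)" and wW: "w \<in> W" by blast
    have pw: "?p = w" using inv by (simp add: op_proc_def)
    have nrw: "\<forall>j rr. i < j \<longrightarrow> \<not> resp_by ls j w rr" using nr pw by simp
    have corw: "correct \<sigma>s w" using cor pw by simp
    define k0 where "k0 = wop (\<sigma>s (Suc i)) w"
    have ph: "(\<exists>A. wph (\<sigma>s c) w = WDisc x A \<and> wop (\<sigma>s c) w = k0) \<or>
         (\<exists>A. wph (\<sigma>s c) w = WWrite A \<and> wop (\<sigma>s c) w = Suc k0)" if "i < c" for c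
      using write_phase[OF inv that] nrw unfolding k0_def by blast
    have is1: "wph (\<sigma>s (Suc i)) w = WDisc x Map.empty" and k0': "k0 = Suc (wop (\<sigma>s i) w)"
      and net1: "net (\<sigma>s (Suc i)) = net (\<sigma>s i) + bcast S w (Discover (Suc (wop (\<sigma>s i) w)) w)"
      using inv_step[OF st inv] unfolding k0_def by auto
    show False
    proof (cases "\<exists>c>i. \<exists>A. wph (\<sigma>s c) w = WWrite A")
      case False
      then have disc: "\<exists>A. wph (\<sigma>s c) w = WDisc x A \<and> wop (\<sigma>s c) w = k0" if "i < c" for c
        using ph[OF that] that by blast
      define D where "D c = (case wph (\<sigma>s c) w of WDisc y A \<Rightarrow> dom A | _ \<Rightarrow> {})" for c
      have mono: "D c \<subseteq> D c'" if "Suc i \<le> c" "c \<le> c'" for c c'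
      proof (rule mono_interval[OF _ that])
        fix c assume "Suc i \<le> c"
        then obtain A A' where "wph (\<sigma>s c) w = WDisc x A" "wph (\<sigma>s (Suc c)) w = WDisc x A'"
          using disc[of c] disc[of "Suc c"] by auto
        then show "D c \<subseteq> D (Suc c)" using wdisc_grow[OF st] unfolding D_def by auto
      qed
      have fin: "finite (D c)" for c
      proof (cases "wph (\<sigma>s c) w")
        case (WDisc y A)
        then have "dom A \<subseteq> S" using binv[of c] unfolding binv_def B9_def by blast
        then show ?thesis using WDisc finS finite_subset unfolding D_def by auto
      qed (auto simp: D_def)
      have h: "\<exists>j. Suc i \<le> j \<and> s \<in> D j \<and> card (D j) < quorum S" if sC: "s \<in> ?C" for s
      proof -
        have m1: "(w, s, Discover k0 w) \<in># net (\<sigma>s (Suc i))" using net1 sC finS k0' by simp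
        obtain j1 r1 where j1: "Suc i \<le> j1" "ls j1 = Dlv (w, s, Discover k0 w) r1"
          using deliver[OF m1] sC by auto
        have m2: "(s, w, DiscoverAck (stag (\<sigma>s j1) s) (sval (\<sigma>s j1) s) k0 s) \<in># net (\<sigma>s (Suc j1))"
          using srv_disc_resp[of W R S "\<sigma>s j1"] st[of j1] j1(2) sC by auto
        obtain j2 r2 where j2: "Suc j1 \<le> j2" "ls j2 = Dlv (s, w, DiscoverAck (stag (\<sigma>s j1) s) (sval (\<sigma>s j1) s) k0 s) r2"
          using deliver[OF m2 corw] by blast
        obtain A2 where A2: "wph (\<sigma>s j2) w = WDisc x A2" "wop (\<sigma>s j2) w = k0" using disc[of j2] j1 j2 by auto
        obtain A3 where A3: "wph (\<sigma>s (Suc j2)) w = WDisc x A3" using disc[of "Suc j2"] j1 j2 by auto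
        have "wph (\<sigma>s (Suc j2)) w = WDisc x (A2(s \<mapsto> stag (\<sigma>s j1) s)) \<and> card (dom (A2(s \<mapsto> stag (\<sigma>s j1) s))) < quorum S"
          using dack_wait_at[of W R S "\<sigma>s j2"] st[of j2] j2(2) wW A2 A3 by metis
        then show ?thesis using j1 j2 unfolding D_def by (intro exI[of _ "Suc j2"]) auto
      qed
      show False using qc[of "Suc i" D ?C "quorum S", OF mono fin Cf Cq q0 h] by blast
    next
      case True
      let ?P = "\<lambda>c. i < c \<and> (\<exists>A. wph (\<sigma>s c) w = WWrite A)"
      define c1 where "c1 = (LEAST c. ?P c)"
      have P1: "?P c1" unfolding c1_def using LeastI_ex[of ?P] True by blast
      have nl: "\<not> ?P c" if "c < c1" for c using not_less_Least[OF that[unfolded c1_def]] .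
      have "c1 \<noteq> Suc i" using P1 is1 by auto
      then obtain d where d: "c1 = Suc d" "i < d" using P1 by (cases c1) auto
      obtain A where Ad: "wph (\<sigma>s d) w = WDisc x A" "wop (\<sigma>s d) w = k0" using ph[OF d(2)] nl[of d] d by auto
      obtain A1 where A1: "wph (\<sigma>s c1) w = WWrite A1" using P1 by blast
      obtain tg where reqs: "\<forall>s\<in>S. (w, s, WriteRequest tg (Some x) (Suc k0) w) \<in># net (\<sigma>s c1)"
        using wdd_reqs[OF st[of d] Ad(1)] A1 d finS Ad(2) by auto
      have wrt: "\<exists>A. wph (\<sigma>s c) w = WWrite A \<and> wop (\<sigma>s c) w = Suc k0" if "c1 \<le> c" for c
      proof -
        have "wop (\<sigma>s c1) w \<le> wop (\<sigma>s c) w" using wop_le that by blast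
        moreover have "wop (\<sigma>s c1) w = Suc k0" using ph[of c1] P1 A1 by auto
        ultimately show ?thesis using ph[of c] P1 that by auto
      qed
      define D where "D c = (case wph (\<sigma>s c) w of WWrite A \<Rightarrow> A | _ \<Rightarrow> {})" for c
      have mono: "D c \<subseteq> D c'" if "c1 \<le> c" "c \<le> c'" for c c'
      proof (rule mono_interval[OF _ that])
        fix c assume "c1 \<le> c"
        then obtain A A' where "wph (\<sigma>s c) w = WWrite A" "wph (\<sigma>s (Suc c)) w = WWrite A'"
          using wrt[of c] wrt[of "Suc c"] by auto
        then show "D c \<subseteq> D (Suc c)" using wwrite_grow[OF st] unfolding D_def by auto
      qed
      have fin: "finite (D c)" for c
      proof (cases "wph (\<sigma>s c) w")
        case (WWrite A)
        then have "A \<subseteq> S" using binv[of c] unfolding binv_def B10_def by blast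
        then show ?thesis using WWrite finS finite_subset unfolding D_def by auto
      qed (auto simp: D_def)
      have h: "\<exists>j. c1 \<le> j \<and> s \<in> D j \<and> card (D j) < quorum S" if sC: "s \<in> ?C" for s
      proof -
        have m1: "(w, s, WriteRequest tg (Some x) (Suc k0) w) \<in># net (\<sigma>s c1)" using reqs sC by blast
        obtain j1 r1 where j1: "c1 \<le> j1" "ls j1 = Dlv (w, s, WriteRequest tg (Some x) (Suc k0) w) r1"
          using deliver[OF m1] sC by auto
        obtain t' v' where m2: "(s, w, WriteAck t' v' (Suc k0) s) \<in># net (\<sigma>s (Suc j1))"
        proof -
          have "step W R S (\<sigma>s j1) (Dlv (w, s, WriteRequest tg (Some x) (Suc k0) w) r1) (\<sigma>s (Suc j1))"
            using st[of j1] j1(2) by simp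
          from srv_write_resp[OF this] sC show ?thesis using that by auto
        qed
        obtain j2 r2 where j2: "Suc j1 \<le> j2" "ls j2 = Dlv (s, w, WriteAck t' v' (Suc k0) s) r2"
          using deliver[OF m2 corw] by blast
        have "i < j2" using j1 j2 d by simp
        then have "r2 = None" using nrw j2(2) unfolding resp_by_def by (cases r2) auto
        obtain A2 where A2: "wph (\<sigma>s j2) w = WWrite A2" "wop (\<sigma>s j2) w = Suc k0" using wrt[of j2] j1 j2 by auto
        have "wph (\<sigma>s (Suc j2)) w = WWrite (insert s A2) \<and> card (insert s A2) < quorum S"
          using wack_wait_at[of W R S "\<sigma>s j2"] st[of j2] j2(2) \<open>r2 = None\<close> wW A2 by metis
        then show ?thesis using j1 j2 unfolding D_def by (intro exI[of _ "Suc j2"]) auto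
      qed
      show False using qc[of c1 D ?C "quorum S", OF mono fin Cf Cq q0 h] by blast
    qed
  next
    assume "\<exists>r. ls i = Inv r ORead \<and> r \<in> R"
    then obtain r where inv: "ls i = Inv r ORead" and rR: "r \<in> R" by blast
    have pr: "?p = r" using inv by (simp add: op_proc_def)
    have nrr: "\<forall>j rr. i < j \<longrightarrow> \<not> resp_by ls j r rr" using nr pr by simp
    have corr: "correct \<sigma>s r" using cor pr by simp
    define k where "k = rop (\<sigma>s (Suc i)) r"
    define rid where "rid = (r, k)"
    have ph: "\<exists>A. rph (\<sigma>s c) r = RWait A \<and> rop (\<sigma>s c) r = k" if "i < c" for c
      using read_phase[OF inv that] nrr unfolding k_def by blast
    have k': "k = Suc (rop (\<sigma>s i) r)"
      and net1: "net (\<sigma>s (Suc i)) = net (\<sigma>s i) + bcast S r (ReadRequest (r, Suc (rop (\<sigma>s i) r)))"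
      using inv_step[OF st inv] unfolding k_def by auto
    define D where "D c = (case rph (\<sigma>s c) r of RWait A \<Rightarrow> dom A | _ \<Rightarrow> {})" for c
    have mono: "D c \<subseteq> D c'" if "Suc i \<le> c" "c \<le> c'" for c c'
    proof (rule mono_interval[OF _ that])
      fix c assume "Suc i \<le> c"
      then obtain A A' where "rph (\<sigma>s c) r = RWait A" "rph (\<sigma>s (Suc c)) r = RWait A'"
        using ph[of c] ph[of "Suc c"] by auto
      then show "D c \<subseteq> D (Suc c)" using rwait_grow[OF st] unfolding D_def by auto
    qed
    have fin: "finite (D c)" for c
    proof (cases "rph (\<sigma>s c) r")
      case (RWait A)
      then have "dom A \<subseteq> S" using binv[of c] unfolding binv_def B11_def by blast
      then show ?thesis using RWait finS finite_subset unfolding D_def by auto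
    qed (auto simp: D_def)
    have relayed: "\<exists>j3. Suc i \<le> j3 \<and> s \<in> srelays (\<sigma>s (Suc j3)) s2 rid \<and>
        (quorum S \<le> card (srelays (\<sigma>s (Suc j3)) s2 rid) \<longrightarrow> rid \<in> sacked (\<sigma>s (Suc j3)) s2)"
      if sC: "s \<in> ?C" and s2C: "s2 \<in> ?C" for s s2
    proof -
      have m1: "(r, s, ReadRequest rid) \<in># net (\<sigma>s (Suc i))" using net1 sC finS k' unfolding rid_def by simp
      obtain j1 r1 where j1: "Suc i \<le> j1" "ls j1 = Dlv (r, s, ReadRequest rid) r1"
        using deliver[OF m1] sC by auto
      have m2: "(s, s2, ReadRelay (stag (\<sigma>s j1) s) (sval (\<sigma>s j1) s) rid s) \<in># net (\<sigma>s (Suc j1))"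
        using srv_readreq_resp[of W R S "\<sigma>s j1"] st[of j1] j1(2) sC s2C finS by auto
      obtain j3 r3 where j3: "Suc j1 \<le> j3" "ls j3 = Dlv (s, s2, ReadRelay (stag (\<sigma>s j1) s) (sval (\<sigma>s j1) s) rid s) r3"
        using deliver[OF m2] s2C by auto
      show ?thesis using srv_relay_resp[of W R S "\<sigma>s j3"] st[of j3] j3(2) s2C j1 j3 by (intro exI[of _ j3]) auto
    qed
    have h: "\<exists>j. Suc i \<le> j \<and> s2 \<in> D j \<and> card (D j) < quorum S" if s2C: "s2 \<in> ?C" for s2
    proof -
      define j3 where "j3 s = (SOME j3. Suc i \<le> j3 \<and> s \<in> srelays (\<sigma>s (Suc j3)) s2 rid \<and>
        (quorum S \<le> card (srelays (\<sigma>s (Suc j3)) s2 rid) \<longrightarrow> rid \<in> sacked (\<sigma>s (Suc j3)) s2))" for s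
      have J: "Suc i \<le> j3 s \<and> s \<in> srelays (\<sigma>s (Suc (j3 s))) s2 rid \<and>
        (quorum S \<le> card (srelays (\<sigma>s (Suc (j3 s))) s2 rid) \<longrightarrow> rid \<in> sacked (\<sigma>s (Suc (j3 s))) s2)"
        if "s \<in> ?C" for s
        unfolding j3_def by (rule someI_ex) (rule relayed[OF that s2C])
      have Cne: "?C \<noteq> {}" using Cq q0 by (metis card.empty not_le)
      define T where "T = Max (j3 ` ?C)"
      have "T \<in> j3 ` ?C" unfolding T_def using Cf Cne by (intro Max_in) auto
      then obtain s0 where s0: "s0 \<in> ?C" "j3 s0 = T" by blast
      have sub: "?C \<subseteq> srelays (\<sigma>s (Suc T)) s2 rid"
      proof
        fix s assume sC: "s \<in> ?C"
        have "j3 s \<le> T" unfolding T_def using Cf sC by (intro Max_ge) auto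
        then have "Suc (j3 s) \<le> Suc T" by simp
        then have "srelays (\<sigma>s (Suc (j3 s))) s2 rid \<subseteq> srelays (\<sigma>s (Suc T)) s2 rid"
          using mono_gen[of "\<lambda>\<sigma>. srelays \<sigma> s2 rid", OF srelays_mono[OF st]] by simp
        then show "s \<in> srelays (\<sigma>s (Suc T)) s2 rid" using J[OF sC] by blast
      qed
      have "srelays (\<sigma>s (Suc T)) s2 rid \<subseteq> S" using binv[of "Suc T"] unfolding binv_def B8_def by blast
      then have "card ?C \<le> card (srelays (\<sigma>s (Suc T)) s2 rid)" using sub finS finite_subset by (intro card_mono) auto
      then have "rid \<in> sacked (\<sigma>s (Suc T)) s2" using J[OF s0(1)] s0(2) Cq by simp
      then obtain j' t v where j': "j' \<le> Suc T" "(s2, r, ReadAck t v rid s2) \<in># net (\<sigma>s j')"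
        using sacked_trace unfolding rid_def by fastforce
      have "k \<le> rop (\<sigma>s j') r" using binv[of j'] j'(2) unfolding binv_def B7_def rid_def by fastforce
      then have ij': "Suc i \<le> j'"
      proof -
        assume kk: "k \<le> rop (\<sigma>s j') r"
        show ?thesis
        proof (rule ccontr)
          assume "\<not> Suc i \<le> j'"
          then have "rop (\<sigma>s j') r \<le> rop (\<sigma>s i) r" using rop_le by simp
          then show False using kk k' by simp
        qed
      qed
      obtain j4 r4 where j4: "j' \<le> j4" "ls j4 = Dlv (s2, r, ReadAck t v rid s2) r4"
        using deliver[OF j'(2) corr] by blast
      have "i < j4" using ij' j4 by simp
      then have "r4 = None" using nrr j4(2) unfolding resp_by_def by (cases r4) auto
      obtain A where A: "rph (\<sigma>s j4) r = RWait A" "rop (\<sigma>s j4) r = k" using ph[of j4] \<open>i < j4\<close> by blast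
      have "rph (\<sigma>s (Suc j4)) r = RWait (A(s2 \<mapsto> (t,v))) \<and> card (dom (A(s2 \<mapsto> (t,v)))) < quorum S"
        using rack_wait_at[of W R S "\<sigma>s j4"] st[of j4] j4(2) \<open>r4 = None\<close> rR A unfolding rid_def by metis
      then show ?thesis using \<open>i < j4\<close> unfolding D_def by (intro exI[of _ "Suc j4"]) auto
    qed
    show False using qc[of "Suc i" D ?C "quorum S", OF mono fin Cf Cq q0 h] by blast
  qed
qed

theorem terminates: "is_op ls i \<Longrightarrow> correct \<sigma>s (op_proc ls i) \<Longrightarrow> \<exists>j r. completes ls i j r"
  using completes_from_resp has_resp by blast

end

theorem mainTheorem2:
  fixes W R S :: "'p::linorder set" and f :: nat
  assumes "W \<inter> R = {}" and "W \<inter> S = {}" and "R \<inter> S = {}"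
    and "2 * f < card S"
  shows "termination_prop W R S f TYPE('v)
       \<and> atomicity_prop W R S f TYPE('v)"
proof
  show "termination_prop W R S f TYPE('v)" unfolding termination_prop_def
  proof (rule allI, rule allI, rule impI)
    fix \<sigma>s :: "nat \<Rightarrow> ('p,'v) gstate" and ls
    assume h: "execution W R S f \<sigma>s ls \<and> fair \<sigma>s ls"
    interpret ohm_fair W R S f \<sigma>s ls using assms h by unfold_locales auto
    show "\<forall>i. is_op ls i \<and> correct \<sigma>s (op_proc ls i) \<longrightarrow> (\<exists>j r. completes ls i j r)"
      using terminates by blast
  qed
  show "atomicity_prop W R S f TYPE('v)" unfolding atomicity_prop_def
  proof (rule allI, rule allI, rule impI)
    fix \<sigma>s :: "nat \<Rightarrow> ('p,'v) gstate" and ls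
    assume h: "execution W R S f \<sigma>s ls \<and> (\<forall>i. is_op ls i \<longrightarrow> (\<exists>j r. completes ls i j r))"
    interpret ohm W R S f \<sigma>s ls using assms h by unfold_locales auto
    show "\<exists>prec. (\<forall>a b. prec a b \<longrightarrow> is_op ls a \<and> is_op ls b)
        \<and> (\<forall>a. \<not> prec a a)
        \<and> (\<forall>a b c. prec a b \<and> prec b c \<longrightarrow> prec a c)
        \<and> (\<forall>a b j r. completes ls a j r \<and> is_op ls b \<and> j < b \<longrightarrow> \<not> prec b a)
        \<and> (\<forall>a b. is_write ls a \<and> is_write ls b \<and> a \<noteq> b \<longrightarrow> prec a b \<or> prec b a)
        \<and> (\<forall>a b. is_read ls a \<and> is_write ls b \<longrightarrow> prec a b \<or> prec b a)
        \<and> (\<forall>a j u. is_read ls a \<and> completes ls a j (RResp u) \<longrightarrow>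
             (\<exists>b. is_write ls b \<and> prec b a
                  \<and> (\<forall>c. is_write ls c \<and> prec c a \<longrightarrow> c = b \<or> prec c b)
                  \<and> u = Some (write_val ls b))
           \<or> ((\<forall>b. is_write ls b \<longrightarrow> \<not> prec b a) \<and> u = None))"
      by (rule exI[of _ prec], rule atomic[OF conjunct2[OF h]])
  qed
qed


end
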